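(* Let $A$ be a finite combinatorial annulus and $r$ a $(b,c)$-strongly bounded refinement. Then there is a constant $k\ge 1$, depending only on $b$ and $c$, such that $\frac1k\mathrm{EEL}(rA)\le\mathrm{EEL}(A)\le k\,\mathrm{EEL}(rA)$.
   Context: Graphs are simple, connected, locally finite. A combinatorial annulus is the 1-skeleton (with its triangular cell structure) of a triangulated topological annulus in the plane, i.e. a region whose boundary is two disjoint Jordan curves, one enclosing the other. An edge path is a sequence of edges $[v_0,v_1],[v_1,v_2],\dots$; $\mathrm{EEL}(A)$ is the extremal length of the family of edge paths connecting the two boundary components of $A$, using metrics on edges: a metric $m:E\to[0,\infty)$ has area $\sum_e m(e)^2$, the length of a path is the sum of $m$ over its edges, and $\mathrm{EEL}=\sup_m (\inf_\gamma L_m(\gamma))^2/\mathrm{area}(m)$ over metrics of finite non-zero area. Refinement: for planar complexes $G=(V,E,F)$ and $rG=(rV,rE,rF)$, $rG$ is a refinement of $G$ if $V\subset rV$ and each edge $e=[x,y]\in E$ corresponds to a path $x=w_0,w_1,\dots,w_n=y$ in $rG$ with $[w_j,w_{j+1}]\in rE$ and $w_j\notin V$ for $0<j<n$ (so new vertices are placed on edges and new edges are added inside faces). Write $\mathrm{vInc}_r(e)=\{w_1,\dots,w_{n-1}\}$, $\mathrm{eInc}_r(e)=\{[w_0,w_1],\dots,[w_{n-1},w_n]\}$, and $\mathrm{eIncAdj}_r(e)=\{[x',y']\in rE: x'\in\mathrm{vInc}_r(e)\cup\{x,y\}$ and $[x',y']$ is contained in a cell of $G$ bounded by $e\}$. $r$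 is $b$-weakly bounded if $|\mathrm{eInc}_r(e)|\le b$ for all $e\in E$, and $(b,c)$-strongly bounded if it is $b$-weakly bounded and, for every $e\in E$ and every vertex $v'$ that is an endpoint of $e$ or lies in $\mathrm{vInc}_r(e)$, $\mathrm{eIncAdj}_r(e)$ contains at most $c$ edges attached to $v'$ lying in any one cell. *)

theory Defs
  imports "HOL-Analysis.Analysis"
begin

text \<open>Planar complexes are given geometrically. Vertices are points of the plane
(complex numbers), an edge is the unordered pair of its endpoints (graphs are simple),
and each edge e is drawn as an arc gam e :: real => complex (an injective path on [0,1])
between its two endpoints.\<close>

definition drawing :: "complex set \<Rightarrow> complex set set \<Rightarrow> (complex set \<Rightarrow> real \<Rightarrow> complex) \<Rightarrow> complex set" where
  "drawing V E gam = V \<union> (\<Union>e\<in>E. path_image (gam e))"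

definition graph_connected :: "complex set \<Rightarrow> complex set set \<Rightarrow> bool" where
  "graph_connected V E \<longleftrightarrow>
     (\<forall>x\<in>V. \<forall>y\<in>V. (x, y) \<in> {(u, v). {u, v} \<in> E}\<^sup>*)"

definition planar_graph :: "complex set \<Rightarrow> complex set set \<Rightarrow> (complex set \<Rightarrow> real \<Rightarrow> complex) \<Rightarrow> bool" where
  "planar_graph V E gam \<longleftrightarrow>
     finite V \<and> V \<noteq> {} \<and>
     (\<forall>e\<in>E. \<exists>x y. e = {x, y} \<and> x \<noteq> y \<and> x \<in> V \<and> y \<in> V \<and>
        arc (gam e) \<and> pathstart (gam e) = x \<and> pathfinish (gam e) = y \<and>
        path_image (gam e) \<inter> V = e) \<and>
     (\<forall>e\<in>E. \<forall>e'\<in>E. e \<noteq> e' \<longrightarrow> path_image (gam e) \<inter> path_image (gam e') \<subseteq> e \<inter> e') \<and>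
     graph_connected V E"

definition jordan_curve :: "(real \<Rightarrow> complex) \<Rightarrow> bool" where
  "jordan_curve J \<longleftrightarrow> simple_path J \<and> pathfinish J = pathstart J"

definition annulus_open :: "(real \<Rightarrow> complex) \<Rightarrow> (real \<Rightarrow> complex) \<Rightarrow> complex set" where
  "annulus_open J1 J2 = inside (path_image J2) \<inter> outside (path_image J1)"

definition annulus_closed :: "(real \<Rightarrow> complex) \<Rightarrow> (real \<Rightarrow> complex) \<Rightarrow> complex set" where
  "annulus_closed J1 J2 = annulus_open J1 J2 \<union> path_image J1 \<union> path_image J2"

definition cells :: "complex set \<Rightarrow> complex set set \<Rightarrow> (complex set \<Rightarrow> real \<Rightarrow> complex)
    \<Rightarrow> (real \<Rightarrow> complex) \<Rightarrow> (real \<Rightarrow> complex) \<Rightarrow> complex set set" where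
  "cells V E gam J1 J2 = components (annulus_open J1 J2 - drawing V E gam)"

definition comb_annulus :: "complex set \<Rightarrow> complex set set \<Rightarrow> (complex set \<Rightarrow> real \<Rightarrow> complex)
    \<Rightarrow> (real \<Rightarrow> complex) \<Rightarrow> (real \<Rightarrow> complex) \<Rightarrow> bool" where
  "comb_annulus V E gam J1 J2 \<longleftrightarrow>
     planar_graph V E gam \<and> jordan_curve J1 \<and> jordan_curve J2 \<and>
     path_image J1 \<subseteq> inside (path_image J2) \<and>
     drawing V E gam \<subseteq> annulus_closed J1 J2 \<and>
     path_image J1 \<union> path_image J2 \<subseteq> drawing V E gam \<and>
     (\<forall>C\<in>cells V E gam J1 J2. \<exists>x y z. x \<noteq> y \<and> y \<noteq> z \<and> x \<noteq> z \<and>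
        {x, y} \<in> E \<and> {y, z} \<in> E \<and> {x, z} \<in> E \<and>
        frontier C = path_image (gam {x, y}) \<union> path_image (gam {y, z}) \<union> path_image (gam {x, z}))"

definition ann_refinement :: "complex set \<Rightarrow> complex set set \<Rightarrow> (complex set \<Rightarrow> real \<Rightarrow> complex)
    \<Rightarrow> (real \<Rightarrow> complex) \<Rightarrow> (real \<Rightarrow> complex)
    \<Rightarrow> complex set \<Rightarrow> complex set set \<Rightarrow> (complex set \<Rightarrow> real \<Rightarrow> complex) \<Rightarrow> bool" where
  "ann_refinement V E gam J1 J2 V' E' gam' \<longleftrightarrow>
     planar_graph V' E' gam' \<and> V \<subseteq> V' \<and>
     V' \<subseteq> V \<union> (\<Union>e\<in>E. path_image (gam e)) \<and>
     (\<forall>e\<in>E. \<exists>x y ws. e = {x, y} \<and> ws \<noteq> [] \<and> hd ws = x \<and> last ws = y \<and>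
        (\<forall>i. Suc i < length ws \<longrightarrow> {ws ! i, ws ! Suc i} \<in> E') \<and>
        (\<forall>i. 0 < i \<and> Suc i < length ws \<longrightarrow> ws ! i \<notin> V) \<and>
        (\<Union>i\<in>{i. Suc i < length ws}. path_image (gam' {ws ! i, ws ! Suc i})) = path_image (gam e)) \<and>
     (\<forall>e'\<in>E'. \<exists>C\<in>cells V E gam J1 J2. path_image (gam' e') \<subseteq> closure C)"

text \<open>vInc, eInc, eIncAdj. The vertices/edges of the path corresponding to e are exactly
the vertices/edges of rA lying on the arc of e.\<close>

definition vInc :: "complex set \<Rightarrow> (complex set \<Rightarrow> real \<Rightarrow> complex) \<Rightarrow> complex set \<Rightarrow> complex set" where
  "vInc V' gam e = (V' \<inter> path_image (gam e)) - e"

definition eInc :: "complex set set \<Rightarrow> (complex set \<Rightarrow> real \<Rightarrow> complex) \<Rightarrow> (complex set \<Rightarrow> real \<Rightarrow> complex)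
    \<Rightarrow> complex set \<Rightarrow> complex set set" where
  "eInc E' gam' gam e = {e' \<in> E'. path_image (gam' e') \<subseteq> path_image (gam e)}"

definition eIncAdj :: "complex set \<Rightarrow> complex set set \<Rightarrow> (complex set \<Rightarrow> real \<Rightarrow> complex)
    \<Rightarrow> (real \<Rightarrow> complex) \<Rightarrow> (real \<Rightarrow> complex)
    \<Rightarrow> complex set \<Rightarrow> complex set set \<Rightarrow> (complex set \<Rightarrow> real \<Rightarrow> complex) \<Rightarrow> complex set \<Rightarrow> complex set set" where
  "eIncAdj V E gam J1 J2 V' E' gam' e =
     {e' \<in> E'. (\<exists>x'\<in>e'. x' \<in> vInc V' gam e \<union> e) \<and>
        (\<exists>C\<in>cells V E gam J1 J2. path_image (gam e) \<subseteq> frontier C \<and> path_image (gam' e') \<subseteq> closure C)}"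

definition weakly_bounded :: "nat \<Rightarrow> complex set set \<Rightarrow> (complex set \<Rightarrow> real \<Rightarrow> complex)
    \<Rightarrow> complex set set \<Rightarrow> (complex set \<Rightarrow> real \<Rightarrow> complex) \<Rightarrow> bool" where
  "weakly_bounded b E gam E' gam' \<longleftrightarrow> (\<forall>e\<in>E. card (eInc E' gam' gam e) \<le> b)"

definition strongly_bounded :: "nat \<Rightarrow> nat \<Rightarrow> complex set \<Rightarrow> complex set set \<Rightarrow> (complex set \<Rightarrow> real \<Rightarrow> complex)
    \<Rightarrow> (real \<Rightarrow> complex) \<Rightarrow> (real \<Rightarrow> complex)
    \<Rightarrow> complex set \<Rightarrow> complex set set \<Rightarrow> (complex set \<Rightarrow> real \<Rightarrow> complex) \<Rightarrow> bool" where
  "strongly_bounded b c V E gam J1 J2 V' E' gam' \<longleftrightarrow>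
     weakly_bounded b E gam E' gam' \<and>
     (\<forall>e\<in>E. \<forall>v'\<in>e \<union> vInc V' gam e. \<forall>C\<in>cells V E gam J1 J2.
        card {e' \<in> eIncAdj V E gam J1 J2 V' E' gam' e. v' \<in> e' \<and> path_image (gam' e') \<subseteq> closure C} \<le> c)"

definition edge_path :: "complex set set \<Rightarrow> complex list \<Rightarrow> bool" where
  "edge_path E ws \<longleftrightarrow> ws \<noteq> [] \<and> (\<forall>i. Suc i < length ws \<longrightarrow> {ws ! i, ws ! Suc i} \<in> E)"

definition path_len :: "(complex set \<Rightarrow> real) \<Rightarrow> complex list \<Rightarrow> real" where
  "path_len m ws = (\<Sum>i<length ws - 1. m {ws ! i, ws ! Suc i})"

definition metric_area :: "complex set set \<Rightarrow> (complex set \<Rightarrow> real) \<Rightarrow> real" where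
  "metric_area E m = (\<Sum>e\<in>E. (m e)\<^sup>2)"

definition EEL :: "complex set set \<Rightarrow> complex set \<Rightarrow> complex set \<Rightarrow> real" where
  "EEL E B1 B2 = Sup {(Inf {path_len m ws | ws. edge_path E ws \<and> hd ws \<in> B1 \<and> last ws \<in> B2})\<^sup>2
                        / metric_area E m | m. (\<forall>e\<in>E. 0 \<le> m e) \<and> 0 < metric_area E m}"

end

theory Submission
  imports Defs "HOL-Complex_Analysis.Complex_Analysis"
begin


fun walk :: "complex set set \<Rightarrow> complex list \<Rightarrow> bool" where
  "walk S [] = False"
| "walk S [x] = True"
| "walk S (x # y # xs) = ({x, y} \<in> S \<and> walk S (y # xs))"

fun plen :: "(complex set \<Rightarrow> real) \<Rightarrow> complex list \<Rightarrow> real" where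
  "plen m [] = 0"
| "plen m [x] = 0"
| "plen m (x # y # xs) = m {x, y} + plen m (y # xs)"

fun eds :: "complex list \<Rightarrow> complex set list" where
  "eds [] = []"
| "eds [x] = []"
| "eds (x # y # xs) = {x, y} # eds (y # xs)"

lemma edge_path_walk: "edge_path S ws = walk S ws"
proof (induction S ws rule: walk.induct)
  case (3 S x y xs)
  have "(\<forall>i. Suc i < length (x # y # xs) \<longrightarrow> {(x # y # xs) ! i, (x # y # xs) ! Suc i} \<in> S)
     \<longleftrightarrow> {x, y} \<in> S \<and> (\<forall>i. Suc i < length (y # xs) \<longrightarrow> {(y # xs) ! i, (y # xs) ! Suc i} \<in> S)"
    (is "?L \<longleftrightarrow> ?R")
  proof
    assume ?L
    then show ?R by (metis Suc_less_eq length_Cons nth_Cons_0 nth_Cons_Suc zero_less_Suc)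
  next
    assume r: ?R
    show ?L
    proof (intro allI impI)
      fix i assume "Suc i < length (x # y # xs)"
      then show "{(x # y # xs) ! i, (x # y # xs) ! Suc i} \<in> S"
        using r by (cases i) auto
    qed
  qed
  then show ?case using 3 by (simp add: edge_path_def)
qed (auto simp: edge_path_def)

lemma path_len_plen: "path_len m ws = plen m ws"
proof (induction m ws rule: plen.induct)
  case (3 m x y xs)
  have "path_len m (x # y # xs) = (\<Sum>i<Suc (length xs). m {(x # y # xs) ! i, (x # y # xs) ! Suc i})"
    by (simp add: path_len_def)
  also have "\<dots> = m {x, y} + (\<Sum>i<length xs. m {(y # xs) ! i, (y # xs) ! Suc i})"
    by (subst sum.lessThan_Suc_shift) simp
  also have "\<dots> = m {x, y} + path_len m (y # xs)" by (simp add: path_len_def)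
  finally show ?case using 3 by simp
qed (auto simp: path_len_def)

lemma plen_eds: "plen m ws = sum_list (map m (eds ws))"
  by (induction m ws rule: plen.induct) auto

lemma walk_eds: "walk S ws \<Longrightarrow> set (eds ws) \<subseteq> S"
  by (induction S ws rule: walk.induct) auto

lemma walk_mono: "walk S ws \<Longrightarrow> S \<subseteq> T \<Longrightarrow> walk T ws"
  by (induction S ws rule: walk.induct) auto

lemma walk_append: "walk S (xs @ y # zs) \<longleftrightarrow> walk S (xs @ [y]) \<and> walk S (y # zs)"
proof (induction xs)
  case Nil then show ?case by simp
next
  case (Cons a xs)
  then show ?case by (cases xs) auto
qed

lemma plen_append: "plen m (xs @ y # zs) = plen m (xs @ [y]) + plen m (y # zs)"
proof (induction xs)
  case Nil then show ?case by simp
next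
  case (Cons a xs)
  then show ?case by (cases xs) auto
qed

lemma walk_rev: "walk S ws \<Longrightarrow> walk S (rev ws)"
proof (induction S ws rule: walk.induct)
  case (3 S x y xs)
  then have "walk S (rev xs @ [y])" by simp
  moreover have "walk S [y, x]" using 3 by (simp add: insert_commute)
  ultimately have "walk S (rev xs @ y # [x])" using walk_append by blast
  then show ?case by simp
qed auto

lemma plen_rev: "plen m (rev ws) = plen m ws"
proof (induction m ws rule: plen.induct)
  case (3 m x y xs)
  have "plen m (rev xs @ y # [x]) = plen m (rev xs @ [y]) + plen m [y, x]"
    by (rule plen_append)
  then show ?case using 3 by (simp add: insert_commute)
qed auto

lemma walk_ne: "walk S ws \<Longrightarrow> ws \<noteq> []" by auto

lemma hd_append_Cons: "hd (xs @ y # zs) = (if xs = [] then y else hd xs)" by (cases xs) auto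

lemma distinct_eds: "distinct ws \<Longrightarrow> distinct (eds ws)"
proof (induction ws rule: eds.induct)
  case (3 x y xs)
  have "\<forall>e\<in>set (eds (y # xs)). e \<subseteq> set (y # xs)"
  proof -
    have "\<And>l. \<forall>e\<in>set (eds l). e \<subseteq> set l"
      by (induct_tac l rule: eds.induct) auto
    then show ?thesis by blast
  qed
  then have "{x, y} \<notin> set (eds (y # xs))" using 3(2) by auto
  then show ?case using 3 by auto
qed auto

lemma walk_distinctify:
  assumes "walk S ws"
  shows "\<exists>ws'. walk S ws' \<and> distinct ws' \<and> hd ws' = hd ws \<and> last ws' = last ws"
  using assms
proof (induction "length ws" arbitrary: ws rule: less_induct)
  case less
  show ?case
  proof (cases "distinct ws")
    case True then show ?thesis using less.prems by blast
  next
    case False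
    then obtain xs y ys zs where ws: "ws = xs @ [y] @ ys @ [y] @ zs"
      using not_distinct_decomp by blast
    have w1: "walk S (xs @ [y])" using less.prems ws walk_append by (metis append_Cons append_Nil)
    have "walk S ((xs @ y # ys) @ y # zs)" using less.prems ws by simp
    then have w2: "walk S (y # zs)" using walk_append by blast
    have w: "walk S (xs @ y # zs)" using w1 w2 walk_append by blast
    have "length (xs @ y # zs) < length ws" using ws by simp
    then obtain ws' where "walk S ws'" "distinct ws'" "hd ws' = hd (xs @ y # zs)" "last ws' = last (xs @ y # zs)"
      using less.hyps w by blast
    moreover have "hd (xs @ y # zs) = hd ws" using ws by (simp add: hd_append_Cons)
    moreover have "last (xs @ y # zs) = last ws" using ws by (cases zs) auto
    ultimately show ?thesis by metis
  qed
qed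

lemma walk_rtrancl:
  assumes "(a, b) \<in> {(u, v). {u, v} \<in> S}\<^sup>*"
  shows "\<exists>ws. walk S ws \<and> hd ws = a \<and> last ws = b"
  using assms
proof (induction rule: rtrancl_induct)
  case base
  then show ?case by (intro exI[of _ "[a]"]) simp
next
  case (step y z)
  then obtain ws where ws: "walk S ws" "hd ws = a" "last ws = y" by blast
  have ne: "ws \<noteq> []" using ws by auto
  then have "ws = butlast ws @ [y]" using ws by (metis append_butlast_last_id)
  then have "walk S (butlast ws @ y # [z])"
    using ws step walk_append[of S "butlast ws" y "[z]"] by simp
  moreover have "hd (butlast ws @ y # [z]) = a"
    using ws \<open>ws = butlast ws @ [y]\<close> by (metis hd_append2 hd_append_Cons list.sel(1) snoc_eq_iff_butlast)
  ultimately show ?case by (intro exI[of _ "butlast ws @ [y, z]"]) simp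
qed

lemma plen_nonneg: "walk S ws \<Longrightarrow> (\<forall>e\<in>S. 0 \<le> m e) \<Longrightarrow> 0 \<le> plen m ws"
  by (induction S ws rule: walk.induct) auto

lemma plen_distinct_le:
  assumes "walk S ws" "distinct ws" "finite S" "\<forall>e\<in>S. 0 \<le> m e"
  shows "plen m ws \<le> sum m S"
proof -
  have "plen m ws = sum m (set (eds ws))"
    using distinct_eds[OF assms(2)] by (simp add: plen_eds sum_list_distinct_conv_sum_set)
  also have "\<dots> \<le> sum m S"
    using walk_eds[OF assms(1)] assms by (intro sum_mono2) auto
  finally show ?thesis .
qed


definition Ps :: "complex set set \<Rightarrow> complex set \<Rightarrow> complex set \<Rightarrow> complex list set" where
  "Ps E B1 B2 = {ws. walk E ws \<and> hd ws \<in> B1 \<and> last ws \<in> B2}"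

definition infl :: "complex set set \<Rightarrow> complex set \<Rightarrow> complex set \<Rightarrow> (complex set \<Rightarrow> real) \<Rightarrow> real" where
  "infl E B1 B2 m = Inf (plen m ` Ps E B1 B2)"

definition adm :: "complex set set \<Rightarrow> (complex set \<Rightarrow> real) \<Rightarrow> bool" where
  "adm E m \<longleftrightarrow> (\<forall>e\<in>E. 0 \<le> m e) \<and> 0 < metric_area E m"

definition ratio :: "complex set set \<Rightarrow> complex set \<Rightarrow> complex set \<Rightarrow> (complex set \<Rightarrow> real) \<Rightarrow> real" where
  "ratio E B1 B2 m = (infl E B1 B2 m)\<^sup>2 / metric_area E m"

lemma EEL_alt: "EEL E B1 B2 = Sup (ratio E B1 B2 ` {m. adm E m})"
proof -
  have eq: "{path_len m ws | ws. edge_path E ws \<and> hd ws \<in> B1 \<and> last ws \<in> B2} = plen m ` Ps E B1 B2" for m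
    by (auto simp: Ps_def edge_path_walk path_len_plen)
  show ?thesis
    unfolding EEL_def eq ratio_def infl_def adm_def setcompr_eq_image by simp
qed

lemma infl_le: "ws \<in> Ps E B1 B2 \<Longrightarrow> (\<forall>e\<in>E. 0 \<le> m e) \<Longrightarrow> infl E B1 B2 m \<le> plen m ws"
  unfolding infl_def
  by (rule cInf_lower) (auto simp: Ps_def intro!: bdd_belowI[of _ 0] plen_nonneg)

lemma le_infl: "Ps E B1 B2 \<noteq> {} \<Longrightarrow> (\<And>ws. ws \<in> Ps E B1 B2 \<Longrightarrow> c \<le> plen m ws) \<Longrightarrow> c \<le> infl E B1 B2 m"
  unfolding infl_def by (rule cInf_greatest) auto

lemma infl_nonneg: "Ps E B1 B2 \<noteq> {} \<Longrightarrow> (\<forall>e\<in>E. 0 \<le> m e) \<Longrightarrow> 0 \<le> infl E B1 B2 m"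
  by (rule le_infl) (auto simp: Ps_def intro: plen_nonneg)

lemma area_nonneg: "0 \<le> metric_area E m"
  unfolding metric_area_def by (simp add: sum_nonneg)

lemma ratio_nonneg: "0 \<le> ratio E B1 B2 m"
  unfolding ratio_def by (simp add: area_nonneg)

lemma m_le_sqrt_area:
  assumes "finite E" "e \<in> E" "0 \<le> m e"
  shows "m e \<le> sqrt (metric_area E m)"
proof -
  have "(m e)\<^sup>2 \<le> metric_area E m"
    unfolding metric_area_def using assms by (intro member_le_sum) auto
  then show ?thesis using assms(3) by (simp add: real_le_rsqrt)
qed

lemma plen_le_sqrt:
  assumes "walk E ws" "finite E" "\<forall>e\<in>E. 0 \<le> m e"
  shows "plen m ws \<le> real (length ws) * sqrt (metric_area E m)"
  using assms
proof (induction E ws rule: walk.induct)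
  case (3 S x y xs)
  then have "m {x, y} \<le> sqrt (metric_area S m)" by (intro m_le_sqrt_area) auto
  moreover have "plen m (y # xs) \<le> real (length (y # xs)) * sqrt (metric_area S m)" using 3 by auto
  ultimately show ?case by (simp add: algebra_simps)
qed (auto simp: area_nonneg)

lemma ratio_bdd:
  assumes "finite E" "Ps E B1 B2 \<noteq> {}"
  shows "bdd_above (ratio E B1 B2 ` {m. adm E m})"
proof -
  obtain ws where ws: "ws \<in> Ps E B1 B2" using assms by blast
  let ?n = "real (length ws)"
  have "ratio E B1 B2 m \<le> ?n\<^sup>2" if "adm E m" for m
  proof -
    have nn: "\<forall>e\<in>E. 0 \<le> m e" and ap: "0 < metric_area E m" using that by (auto simp: adm_def)
    have "0 \<le> infl E B1 B2 m" using infl_nonneg assms nn by blast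
    moreover have "infl E B1 B2 m \<le> ?n * sqrt (metric_area E m)"
      using infl_le[OF ws nn] plen_le_sqrt[of E ws m] ws assms nn by (auto simp: Ps_def)
    ultimately have "(infl E B1 B2 m)\<^sup>2 \<le> (?n * sqrt (metric_area E m))\<^sup>2"
      by (intro power_mono) auto
    also have "\<dots> = ?n\<^sup>2 * metric_area E m" using ap by (simp add: power_mult_distrib)
    finally show ?thesis unfolding ratio_def using ap by (simp add: divide_le_eq)
  qed
  then show ?thesis by (intro bdd_aboveI[of _ "?n\<^sup>2"]) auto
qed

lemma adm_one: "finite E \<Longrightarrow> E \<noteq> {} \<Longrightarrow> adm E (\<lambda>_. 1)"
  unfolding adm_def metric_area_def by (simp add: card_gt_0_iff)

lemma EEL_nonneg:
  assumes "finite E" "E \<noteq> {}" "Ps E B1 B2 \<noteq> {}"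
  shows "0 \<le> EEL E B1 B2"
proof -
  have "ratio E B1 B2 (\<lambda>_. 1) \<le> Sup (ratio E B1 B2 ` {m. adm E m})"
    using adm_one[OF assms(1,2)] ratio_bdd[OF assms(1,3)] by (intro cSup_upper) auto
  then show ?thesis using ratio_nonneg[of E B1 B2 "\<lambda>_. 1"] by (simp add: EEL_alt)
qed

lemma ratio_le_EEL:
  assumes "finite E" "Ps E B1 B2 \<noteq> {}" "adm E m"
  shows "ratio E B1 B2 m \<le> EEL E B1 B2"
  unfolding EEL_alt using assms ratio_bdd by (intro cSup_upper) auto

lemma area_zero:
  assumes "finite E" "metric_area E m = 0" "e \<in> E"
  shows "m e = 0"
proof -
  have "\<forall>e\<in>E. (m e)\<^sup>2 = 0" using assms unfolding metric_area_def
    by (subst sum_nonneg_eq_0_iff[symmetric]) auto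
  then show ?thesis using assms by auto
qed

lemma plen_zero: "walk E ws \<Longrightarrow> (\<forall>e\<in>E. m e = 0) \<Longrightarrow> plen m ws = 0"
  by (induction E ws rule: walk.induct) auto

lemma GC:
  assumes fS: "finite S" and fT: "finite T" and PS: "Ps S A1 A2 \<noteq> {}" and PT: "Ps T B1 B2 \<noteq> {}"
    and neS: "S \<noteq> {}" and neT: "T \<noteq> {}" and K: "0 < K"
    and H: "\<And>ms. adm S ms \<Longrightarrow> \<exists>mt. (\<forall>e\<in>T. 0 \<le> mt e) \<and> metric_area T mt \<le> K * metric_area S ms
              \<and> infl S A1 A2 ms \<le> infl T B1 B2 mt"
  shows "EEL S A1 A2 \<le> K * EEL T B1 B2"
proof -
  have "ratio S A1 A2 ms \<le> K * EEL T B1 B2" if ms: "adm S ms" for ms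
  proof -
    obtain mt where nn: "\<forall>e\<in>T. 0 \<le> mt e" and ar: "metric_area T mt \<le> K * metric_area S ms"
      and il: "infl S A1 A2 ms \<le> infl T B1 B2 mt" using H[OF ms] by blast
    have nns: "\<forall>e\<in>S. 0 \<le> ms e" and aps: "0 < metric_area S ms" using ms by (auto simp: adm_def)
    have i0: "0 \<le> infl S A1 A2 ms" using infl_nonneg PS nns by blast
    have E0: "0 \<le> EEL T B1 B2" using EEL_nonneg fT neT PT by blast
    show ?thesis
    proof (cases "metric_area T mt = 0")
      case True
      then have "\<forall>e\<in>T. mt e = 0" using area_zero fT by blast
      obtain ws where ws: "ws \<in> Ps T B1 B2" using PT by blast
      have "infl T B1 B2 mt \<le> 0"
        using infl_le[OF ws nn] plen_zero[of T ws mt] ws \<open>\<forall>e\<in>T. mt e = 0\<close> by (auto simp: Ps_def)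
      then have "infl S A1 A2 ms = 0" using il i0 by linarith
      then have "ratio S A1 A2 ms = 0" by (simp add: ratio_def)
      then show ?thesis using E0 K by simp
    next
      case False
      then have apt: "0 < metric_area T mt" using area_nonneg[of T mt] by linarith
      have admt: "adm T mt" using nn apt by (simp add: adm_def)
      have "(infl S A1 A2 ms)\<^sup>2 \<le> (infl T B1 B2 mt)\<^sup>2" using il i0 by (intro power_mono) auto
      then have "ratio S A1 A2 ms \<le> (infl T B1 B2 mt)\<^sup>2 / metric_area S ms"
        unfolding ratio_def using aps by (intro divide_right_mono) auto
      also have "\<dots> \<le> (infl T B1 B2 mt)\<^sup>2 / (metric_area T mt / K)"
        using ar K apt aps by (intro divide_left_mono) (auto simp: field_simps)
      also have "\<dots> = K * ratio T B1 B2 mt" using K by (simp add: ratio_def field_simps)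
      also have "\<dots> \<le> K * EEL T B1 B2" using ratio_le_EEL[OF fT PT admt] K by simp
      finally show ?thesis .
    qed
  qed
  then show ?thesis unfolding EEL_alt[of S]
    using adm_one[OF fS neS] by (intro cSup_least) auto
qed


lemma PG_props:
  assumes "planar_graph V E gam" "e \<in> E"
  shows "\<exists>x y. e = {x, y} \<and> x \<noteq> y \<and> x \<in> V \<and> y \<in> V \<and>
        arc (gam e) \<and> pathstart (gam e) = x \<and> pathfinish (gam e) = y \<and>
        path_image (gam e) \<inter> V = e"
proof -
  have "\<forall>e\<in>E. \<exists>x y. e = {x, y} \<and> x \<noteq> y \<and> x \<in> V \<and> y \<in> V \<and>
        arc (gam e) \<and> pathstart (gam e) = x \<and> pathfinish (gam e) = y \<and>
        path_image (gam e) \<inter> V = e"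
    using assms(1) unfolding planar_graph_def by (elim conjE)
  then show ?thesis using assms(2) by (rule bspec)
qed

lemma PG_edge:
  assumes "planar_graph V E gam" "e \<in> E"
  obtains x y where "e = {x, y}" "x \<noteq> y" "x \<in> V" "y \<in> V" "arc (gam e)"
    "pathstart (gam e) = x" "pathfinish (gam e) = y" "path_image (gam e) \<inter> V = e"
  using PG_props[OF assms] by blast

lemma PG_disj:
  assumes "planar_graph V E gam" "e \<in> E" "e' \<in> E" "e \<noteq> e'"
  shows "path_image (gam e) \<inter> path_image (gam e') \<subseteq> e \<inter> e'"
proof -
  have "\<forall>e\<in>E. \<forall>e'\<in>E. e \<noteq> e' \<longrightarrow> path_image (gam e) \<inter> path_image (gam e') \<subseteq> e \<inter> e'"
    using assms(1) unfolding planar_graph_def by (elim conjE)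
  then show ?thesis using assms(2-4) by blast
qed

lemma PG_finite: "planar_graph V E gam \<Longrightarrow> finite V" by (simp add: planar_graph_def)

lemma PG_connected: "planar_graph V E gam \<Longrightarrow> graph_connected V E" by (simp add: planar_graph_def)

lemma PG_arc_V: "planar_graph V E gam \<Longrightarrow> e \<in> E \<Longrightarrow> path_image (gam e) \<inter> V = e"
  using PG_props by blast

lemma PG_arc: "planar_graph V E gam \<Longrightarrow> e \<in> E \<Longrightarrow> arc (gam e)"
  using PG_props by blast

lemma PG_edge_sub: "planar_graph V E gam \<Longrightarrow> e \<in> E \<Longrightarrow> e \<subseteq> V"
  using PG_arc_V by blast

lemma PG_ends: "planar_graph V E gam \<Longrightarrow> e \<in> E \<Longrightarrow> e \<subseteq> path_image (gam e)"
  using PG_arc_V by blast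

lemma PG_E_sub: "planar_graph V E gam \<Longrightarrow> E \<subseteq> Pow V"
  using PG_edge_sub by blast

lemma PG_finite_E: assumes "planar_graph V E gam" shows "finite E"
  by (rule finite_subset[OF PG_E_sub[OF assms]]) (simp add: PG_finite[OF assms])

lemma PG_inter:
  assumes "planar_graph V E gam" "e \<in> E" "e' \<in> E" "p \<in> path_image (gam e)" "p \<in> path_image (gam e')" "p \<notin> V"
  shows "e = e'"
proof (rule ccontr)
  assume "e \<noteq> e'"
  then have "p \<in> e \<inter> e'" using PG_disj[OF assms(1-3)] assms(4,5) by blast
  moreover have "e \<subseteq> V" using PG_edge_sub[OF assms(1,2)] .
  ultimately show False using assms(6) by blast
qed

lemma arc_closed: "arc (g::real\<Rightarrow>complex) \<Longrightarrow> closed (path_image g)"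
  by (simp add: arc_imp_path closed_path_image)

lemma closed_drawing_part:
  assumes "planar_graph V E gam" "F \<subseteq> E"
  shows "closed (V \<union> (\<Union>e\<in>F. path_image (gam e)))"
proof -
  have "finite F" using PG_finite_E[OF assms(1)] assms(2) finite_subset by blast
  moreover have "\<forall>e\<in>F. closed (path_image (gam e))"
  proof
    fix e assume "e \<in> F"
    then have "e \<in> E" using assms(2) by blast
    then show "closed (path_image (gam e))" by (rule arc_closed[OF PG_arc[OF assms(1)]])
  qed
  ultimately have "closed (\<Union>e\<in>F. path_image (gam e))" by (intro closed_UN) auto
  moreover have "closed V" using PG_finite[OF assms(1)] by (simp add: finite_imp_closed)
  ultimately show ?thesis by (intro closed_Un) auto
qed

lemma closed_drawing: "planar_graph V E gam \<Longrightarrow> closed (drawing V E gam)"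
  unfolding drawing_def by (rule closed_drawing_part[OF _ subset_refl])

lemma arc_infinite:
  assumes "arc g" shows "infinite (path_image g)"
proof
  have inj: "inj_on g {0..1}" using assms by (simp add: arc_def)
  assume "finite (path_image g)"
  then have "finite (g ` {0..1})" by (simp add: path_image_def)
  then have "finite {0..1::real}" using finite_imageD inj by blast
  then show False using infinite_Icc[of "0::real" 1] by simp
qed





lemma NJA:
  fixes g J :: "real \<Rightarrow> complex"
  assumes g: "arc g" and J: "simple_path J" "pathfinish J = pathstart J"
    and sub: "path_image J \<subseteq> path_image g"
  shows False
proof -
  obtain h where hom: "homeomorphism {0..1} (path_image g) g h"
    using homeomorphism_arc[OF g] by blast
  have hg: "\<And>y. y \<in> path_image g \<Longrightarrow> g (h y) = y" and hc: "continuous_on (path_image g) h"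
    using hom by (auto simp: homeomorphism_def)
  define f where "f = h \<circ> J"
  have Jc: "continuous_on {0..1} J" using J by (simp add: simple_path_def path_def)
  have JI: "J ` {0..1} \<subseteq> path_image g" using sub by (simp add: path_image_def)
  have fc: "continuous_on {0..1} f"
    unfolding f_def by (rule continuous_on_compose[OF Jc continuous_on_subset[OF hc JI]])
  have lf: "\<And>s t. s \<in> {0..1} \<Longrightarrow> t \<in> {0..1} \<Longrightarrow> J s = J t \<Longrightarrow> s = t \<or> s = 0 \<and> t = 1 \<or> s = 1 \<and> t = 0"
    using J by (auto simp: simple_path_def loop_free_def)
  have feq: "J s = J t" if "s \<in> {0..1}" "t \<in> {0..1}" "f s = f t" for s t
  proof -
    have m: "J s \<in> path_image g" "J t \<in> path_image g" using JI that by auto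
    have "h (J s) = h (J t)" using that(3) by (simp add: f_def)
    then have "g (h (J s)) = g (h (J t))" by simp
    then show ?thesis using hg[OF m(1)] hg[OF m(2)] by simp
  qed
  have f01: "f 0 = f 1" using J by (simp add: f_def pathstart_def pathfinish_def)
  have fh: "f (1/2) \<noteq> f 0"
  proof
    assume "f (1/2) = f 0"
    then have "J (1/2) = J 0" using feq by auto
    then show False using lf[of "1/2" 0] by auto
  qed
  have fc1: "continuous_on {0..1/2} f" by (rule continuous_on_subset[OF fc]) auto
  have fc2: "continuous_on {1/2..1} f" by (rule continuous_on_subset[OF fc]) auto
  define d where "d = (f 0 + f (1/2)) / 2"
  have "\<exists>s t. 0 \<le> s \<and> s \<le> 1/2 \<and> 1/2 \<le> t \<and> t \<le> 1 \<and> f s = d \<and> f t = d"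
  proof (cases "f 0 < f (1/2)")
    case True
    obtain s where "0 \<le> s" "s \<le> 1/2" "f s = d"
      using IVT'[of f 0 d "1/2"] fc1 True by (auto simp: d_def)
    moreover obtain t where "1/2 \<le> t" "t \<le> 1" "f t = d"
      using IVT2'[of f 1 d "1/2"] fc2 True f01 by (auto simp: d_def)
    ultimately show ?thesis by blast
  next
    case False
    then have F: "f (1/2) < f 0" using fh by auto
    obtain s where "0 \<le> s" "s \<le> 1/2" "f s = d"
      using IVT2'[of f "1/2" d 0] fc1 F by (auto simp: d_def)
    moreover obtain t where "1/2 \<le> t" "t \<le> 1" "f t = d"
      using IVT'[of f "1/2" d 1] fc2 F f01 by (auto simp: d_def)
    ultimately show ?thesis by blast
  qed
  then obtain s t where st: "0 \<le> s" "s \<le> 1/2" "1/2 \<le> t" "t \<le> 1" "f s = d" "f t = d" by blast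
  have "s \<noteq> 0" using st f01 fh by (auto simp: d_def)
  moreover have "t \<noteq> 1" using st f01 fh by (auto simp: d_def)
  moreover have "s \<noteq> t"
  proof
    assume "s = t"
    then have "t = 1/2" using st by auto
    then have "f (1/2) = d" using st(6) by metis
    then show False using fh by (simp add: d_def)
  qed
  moreover have "J s = J t" using feq st by auto
  ultimately show False using lf[of s t] st by auto
qed

lemma CP:
  fixes J :: "real \<Rightarrow> complex"
  assumes J: "simple_path J" "pathfinish J = pathstart J"
  shows "connected (path_image J - {a})"
proof -
  have Jc: "continuous_on {0..1} J" using J by (simp add: simple_path_def path_def)
  have lf: "\<And>s t. s \<in> {0..1} \<Longrightarrow> t \<in> {0..1} \<Longrightarrow> J s = J t \<Longrightarrow> s = t \<or> s = 0 \<and> t = 1 \<or> s = 1 \<and> t = 0"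
    using J by (auto simp: simple_path_def loop_free_def)
  have J01: "J 0 = J 1" using J by (simp add: pathstart_def pathfinish_def)
  show ?thesis
  proof (cases "a \<in> path_image J")
    case False
    then show ?thesis using connected_simple_path_image[OF J(1)] by simp
  next
    case True
    then obtain t0 where t0: "t0 \<in> {0..1}" "J t0 = a" by (auto simp: path_image_def)
    show ?thesis
    proof (cases "t0 = 0 \<or> t0 = 1")
      case True
      then have a0: "J 0 = a" using t0 J01 by auto
      have "path_image J - {a} = J ` {0<..<1}"
      proof
        show "path_image J - {a} \<subseteq> J ` {0<..<1}"
        proof
          fix p assume "p \<in> path_image J - {a}"
          then obtain s where "s \<in> {0..1}" "J s = p" "p \<noteq> a" by (auto simp: path_image_def)
          then have "s \<noteq> 0" "s \<noteq> 1" using a0 J01 by auto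
          then show "p \<in> J ` {0<..<1}" using \<open>s \<in> {0..1}\<close> \<open>J s = p\<close> by auto
        qed
      next
        show "J ` {0<..<1} \<subseteq> path_image J - {a}"
        proof
          fix p assume "p \<in> J ` {0<..<1}"
          then obtain s where s: "s \<in> {0<..<1}" "J s = p" by auto
          have "p \<noteq> a" using lf[of s 0] s a0 by auto
          then show "p \<in> path_image J - {a}" using s by (auto simp: path_image_def)
        qed
      qed
      moreover have "connected (J ` {0<..<1})"
        by (rule connected_continuous_image[OF continuous_on_subset[OF Jc]]) auto
      ultimately show ?thesis by simp
    next
      case False
      then have t0': "0 < t0" "t0 < 1" using t0 by auto
      have "path_image J - {a} = J ` {0..<t0} \<union> J ` {t0<..1}"
      proof
        show "path_image J - {a} \<subseteq> J ` {0..<t0} \<union> J ` {t0<..1}"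
        proof
          fix p assume "p \<in> path_image J - {a}"
          then obtain s where "s \<in> {0..1}" "J s = p" "p \<noteq> a" by (auto simp: path_image_def)
          then have "s \<noteq> t0" using t0 by auto
          then show "p \<in> J ` {0..<t0} \<union> J ` {t0<..1}" using \<open>s \<in> {0..1}\<close> \<open>J s = p\<close>
            by (cases "s < t0") auto
        qed
      next
        show "J ` {0..<t0} \<union> J ` {t0<..1} \<subseteq> path_image J - {a}"
        proof
          fix p assume "p \<in> J ` {0..<t0} \<union> J ` {t0<..1}"
          then have "p \<in> J ` ({0..<t0} \<union> {t0<..1})" by (simp add: image_Un)
          then obtain s where s0: "s \<in> {0..<t0} \<union> {t0<..1}" "J s = p" by blast
          then have s: "s \<in> {0..1}" "s \<noteq> t0" "J s = p" using t0' by auto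
          have "p \<noteq> a" using lf[of s t0] s t0 t0' by auto
          then show "p \<in> path_image J - {a}" using s by (auto simp: path_image_def)
        qed
      qed
      moreover have "connected (J ` {0..<t0})"
        by (rule connected_continuous_image[OF continuous_on_subset[OF Jc]]) (use t0' in auto)
      moreover have "connected (J ` {t0<..1})"
        by (rule connected_continuous_image[OF continuous_on_subset[OF Jc]]) (use t0' in auto)
      moreover have "J 0 \<in> J ` {0..<t0} \<inter> J ` {t0<..1}"
      proof -
        have "J 0 \<in> J ` {0..<t0}" using t0' by auto
        moreover have "J 1 \<in> J ` {t0<..1}" using t0' by auto
        ultimately show ?thesis using J01 by simp
      qed
      ultimately show ?thesis by (metis connected_Un empty_iff)
    qed
  qed
qed

lemma TL_half:
  assumes G: "planar_graph V E gam" and J: "simple_path J" "pathfinish J = pathstart J"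
    and sub: "path_image J \<subseteq> drawing V E gam" and e: "e \<in> E" "e = {x, y}"
    and v: "v \<in> path_image J" "v \<in> path_image (gam e)" "v \<notin> V"
  shows "y \<in> path_image J"
proof (rule ccontr)
  assume ny: "y \<notin> path_image J"
  define T where "T = path_image J - {x}"
  define D where "D = V \<union> (\<Union>h\<in>E - {e}. path_image (gam h))"
  have cT: "connected T" unfolding T_def by (rule CP[OF J])
  have cD: "closed D" unfolding D_def by (rule closed_drawing_part[OF G]) auto
  have cE: "closed (path_image (gam e))"
    by (rule arc_closed[OF PG_arc[OF G e(1)]])
  have cover: "T \<subseteq> (T \<inter> path_image (gam e)) \<union> (T \<inter> D)"
    using sub unfolding T_def D_def drawing_def by blast
  have xV: "x \<in> V" "y \<in> V" using PG_edge[OF G e(1)] e(2) by (metis doubleton_eq_iff)+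
  have disj: "(T \<inter> path_image (gam e)) \<inter> (T \<inter> D) = {}"
  proof (rule ccontr)
    assume "\<not> ?thesis"
    then obtain p where p: "p \<in> T" "p \<in> path_image (gam e)" "p \<in> D" by blast
    have "p \<noteq> x" "p \<noteq> y" using p ny unfolding T_def by auto
    then have pe: "p \<notin> e" using e by auto
    show False
    proof (cases "p \<in> V")
      case True
      then show False using PG_arc_V[OF G e(1)] p pe by blast
    next
      case False
      then obtain h where "h \<in> E - {e}" "p \<in> path_image (gam h)" using p unfolding D_def by blast
      then show False using PG_inter[OF G e(1), of h p] p False by auto
    qed
  qed
  have ne1: "T \<inter> path_image (gam e) \<noteq> {}" using v xV unfolding T_def by auto
  have "T \<inter> D = {}"
  proof (rule ccontr)
    assume "T \<inter> D \<noteq> {}"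
    moreover have "closedin (top_of_set T) (T \<inter> path_image (gam e))"
      using cE by (simp add: closedin_closed_Int)
    moreover have "closedin (top_of_set T) (T \<inter> D)"
      using cD by (simp add: closedin_closed_Int)
    ultimately show False using cT cover disj ne1 unfolding connected_closedin by blast
  qed
  then have "T \<subseteq> path_image (gam e)" using cover by blast
  moreover have "x \<in> path_image (gam e)" using PG_ends[OF G e(1)] e(2) by blast
  ultimately have "path_image J \<subseteq> path_image (gam e)" unfolding T_def by blast
  moreover have "arc (gam e)" using G e(1) by (rule PG_arc)
  ultimately show False using NJA J by blast
qed

lemma TL:
  assumes G: "planar_graph V E gam" and J: "simple_path J" "pathfinish J = pathstart J"
    and sub: "path_image J \<subseteq> drawing V E gam" and e: "e \<in> E"
    and v: "v \<in> path_image J" "v \<in> path_image (gam e)" "v \<notin> V"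
  shows "e \<subseteq> path_image J"
proof -
  obtain x y where xy: "e = {x, y}" using PG_edge[OF G e] by blast
  have "y \<in> path_image J" using TL_half[OF G J sub e xy v] .
  moreover have "x \<in> path_image J" using TL_half[OF G J sub e, of y x] xy v by (simp add: insert_commute)
  ultimately show ?thesis using xy by auto
qed

lemma J_meets_V:
  assumes G: "planar_graph V E gam" and J: "simple_path J" "pathfinish J = pathstart J"
    and sub: "path_image J \<subseteq> drawing V E gam"
  shows "V \<inter> path_image J \<noteq> {}"
proof -
  obtain p where p: "p \<in> path_image J" by (meson path_image_nonempty ex_in_conv)
  show ?thesis
  proof (cases "p \<in> V")
    case True then show ?thesis using p by blast
  next
    case False
    then obtain e where e: "e \<in> E" "p \<in> path_image (gam e)" using p sub unfolding drawing_def by blast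
    have "e \<subseteq> path_image J" using TL[OF G J sub e(1) p e(2) False] .
    moreover obtain x y where "e = {x, y}" "x \<in> V" using PG_edge[OF G e(1)] by blast
    ultimately show ?thesis by blast
  qed
qed


lemma CA_PG: "comb_annulus V E gam J1 J2 \<Longrightarrow> planar_graph V E gam"
  by (simp add: comb_annulus_def)
lemma CA_J1: "comb_annulus V E gam J1 J2 \<Longrightarrow> simple_path J1 \<and> pathfinish J1 = pathstart J1"
  by (simp add: comb_annulus_def jordan_curve_def)
lemma CA_J2: "comb_annulus V E gam J1 J2 \<Longrightarrow> simple_path J2 \<and> pathfinish J2 = pathstart J2"
  by (simp add: comb_annulus_def jordan_curve_def)
lemma CA_J12: "comb_annulus V E gam J1 J2 \<Longrightarrow> path_image J1 \<subseteq> inside (path_image J2)"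
  by (simp add: comb_annulus_def)
lemma CA_Jsub: "comb_annulus V E gam J1 J2 \<Longrightarrow> path_image J1 \<subseteq> drawing V E gam \<and> path_image J2 \<subseteq> drawing V E gam"
  by (simp add: comb_annulus_def)
lemma CA_tri:
  assumes "comb_annulus V E gam J1 J2" "C \<in> cells V E gam J1 J2"
  shows "\<exists>x y z. x \<noteq> y \<and> y \<noteq> z \<and> x \<noteq> z \<and>
        {x, y} \<in> E \<and> {y, z} \<in> E \<and> {x, z} \<in> E \<and>
        frontier C = path_image (gam {x, y}) \<union> path_image (gam {y, z}) \<union> path_image (gam {x, z})"
proof -
  have "\<forall>C\<in>cells V E gam J1 J2. \<exists>x y z. x \<noteq> y \<and> y \<noteq> z \<and> x \<noteq> z \<and>
        {x, y} \<in> E \<and> {y, z} \<in> E \<and> {x, z} \<in> E \<and>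
        frontier C = path_image (gam {x, y}) \<union> path_image (gam {y, z}) \<union> path_image (gam {x, z})"
    using assms(1) unfolding comb_annulus_def by (elim conjE)
  then show ?thesis using assms(2) by (rule bspec)
qed

lemma J1J2_disj: "comb_annulus V E gam J1 J2 \<Longrightarrow> path_image J1 \<inter> path_image J2 = {}"
  using CA_J12 inside_no_overlap by blast

lemma cell_basic:
  assumes CA: "comb_annulus V E gam J1 J2" and C: "C \<in> cells V E gam J1 J2"
  shows "open C" "connected C" "C \<noteq> {}" "C \<inter> drawing V E gam = {}" "bounded C"
proof -
  have G: "planar_graph V E gam" using CA_PG[OF CA] .
  have c1: "closed (path_image J1)" using CA_J1[OF CA] by (simp add: closed_path_image simple_path_imp_path)
  have c2: "closed (path_image J2)" using CA_J2[OF CA] by (simp add: closed_path_image simple_path_imp_path)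
  have b2: "bounded (path_image J2)" using CA_J2[OF CA] by (simp add: bounded_path_image simple_path_imp_path)
  have oA: "open (annulus_open J1 J2 - drawing V E gam)"
    unfolding annulus_open_def
    by (intro open_Diff open_Int open_inside open_outside c1 c2 closed_drawing[OF G])
  have Cc: "C \<in> components (annulus_open J1 J2 - drawing V E gam)" using C by (simp add: cells_def)
  show "open C" using open_components[OF oA Cc] .
  show "connected C" using in_components_connected[OF Cc] .
  show "C \<noteq> {}" using in_components_nonempty[OF Cc] .
  show "C \<inter> drawing V E gam = {}" using in_components_subset[OF Cc] by blast
  have "C \<subseteq> inside (path_image J2)" using in_components_subset[OF Cc] by (auto simp: annulus_open_def)
  then show "bounded C" using bounded_inside[OF b2] bounded_subset by blast
qed

lemma cell_frontier:
  assumes CA: "comb_annulus V E gam J1 J2" and C: "C \<in> cells V E gam J1 J2"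
    and p: "p \<in> closure C" "p \<in> drawing V E gam"
  shows "p \<in> frontier C"
  using cell_basic[OF CA C] p closure_Un_frontier by blast

lemma clopen_eq:
  fixes U C :: "complex set"
  assumes "connected U" "open C" "C \<subseteq> U" "C \<noteq> {}" "closure C \<inter> U \<subseteq> C"
  shows "C = U"
proof -
  have "openin (top_of_set U) (U \<inter> C)" using openin_open_Int assms(2) by blast
  moreover have "U \<inter> C = C" using assms(3) by blast
  ultimately have "openin (top_of_set U) C" by simp
  moreover have "closedin (top_of_set U) C"
    unfolding closedin_closed using assms closure_subset by (intro exI[of _ "closure C"]) auto
  ultimately show ?thesis using assms(1,4) unfolding connected_clopen by blast
qed

lemma cell_inside:
  assumes CA: "comb_annulus V E gam J1 J2" and C: "C \<in> cells V E gam J1 J2"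
    and sp: "simple_path \<Gamma>" "pathfinish \<Gamma> = pathstart \<Gamma>" and im: "path_image \<Gamma> = frontier C"
  shows "C = inside (path_image \<Gamma>)"
proof -
  let ?T = "path_image \<Gamma>"
  note cb = cell_basic[OF CA C]
  note JIO = Jordan_inside_outside[OF sp]
  have CT: "C \<inter> ?T = {}" using cb(1) im by (simp add: frontier_def interior_open)
  have cl: "closure C = C \<union> ?T" using im closure_Un_frontier by blast
  have "C \<subseteq> inside ?T \<union> outside ?T" using CT JIO by blast
  then have "inside ?T \<inter> C = {} \<or> outside ?T \<inter> C = {}"
    using connectedD[OF cb(2), of "inside ?T" "outside ?T"] JIO by blast
  then consider "C \<subseteq> inside ?T" | "C \<subseteq> outside ?T" using \<open>C \<subseteq> inside ?T \<union> outside ?T\<close> by blast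
  then show ?thesis
  proof cases
    case 1
    have "closure C \<inter> inside ?T \<subseteq> C" using cl inside_no_overlap by blast
    then show ?thesis using clopen_eq[of "inside ?T" C] JIO cb 1 by blast
  next
    case 2
    have "closure C \<inter> outside ?T \<subseteq> C" using cl outside_no_overlap by blast
    then have "C = outside ?T" using clopen_eq[of "outside ?T" C] JIO cb 2 by blast
    then show ?thesis using cb(5) JIO by simp
  qed
qed

definition orp :: "(complex set \<Rightarrow> real \<Rightarrow> complex) \<Rightarrow> complex \<Rightarrow> complex \<Rightarrow> real \<Rightarrow> complex" where
  "orp gam u v = (if pathstart (gam {u, v}) = u then gam {u, v} else reversepath (gam {u, v}))"

lemma orp_props:
  assumes G: "planar_graph V E gam" and e: "{u, v} \<in> E" and uv: "u \<noteq> v"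
  shows "arc (orp gam u v)" "pathstart (orp gam u v) = u" "pathfinish (orp gam u v) = v"
    "path_image (orp gam u v) = path_image (gam {u, v})"
proof -
  obtain a b where ab: "{u, v} = {a, b}" "arc (gam {u, v})" "pathstart (gam {u, v}) = a" "pathfinish (gam {u, v}) = b" "a \<noteq> b"
    using PG_edge[OF G e] by metis
  have "(a = u \<and> b = v) \<or> (a = v \<and> b = u)" using ab(1) by (metis doubleton_eq_iff)
  then have "arc (orp gam u v) \<and> pathstart (orp gam u v) = u \<and> pathfinish (orp gam u v) = v \<and>
    path_image (orp gam u v) = path_image (gam {u, v})"
    using ab uv by (auto simp: orp_def arc_reversepath)
  then show "arc (orp gam u v)" "pathstart (orp gam u v) = u" "pathfinish (orp gam u v) = v"
    "path_image (orp gam u v) = path_image (gam {u, v})" by auto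
qed

definition tri_path :: "(complex set \<Rightarrow> real \<Rightarrow> complex) \<Rightarrow> complex \<Rightarrow> complex \<Rightarrow> complex \<Rightarrow> real \<Rightarrow> complex" where
  "tri_path gam x y z = orp gam x z +++ orp gam z y"

lemma tri_props:
  assumes G: "planar_graph V E gam" and e: "{x, y} \<in> E" "{x, z} \<in> E" "{y, z} \<in> E"
    and d: "x \<noteq> y" "x \<noteq> z" "y \<noteq> z"
  shows "arc (tri_path gam x y z)" "pathstart (tri_path gam x y z) = x" "pathfinish (tri_path gam x y z) = y"
    "path_image (tri_path gam x y z) = path_image (gam {x, z}) \<union> path_image (gam {y, z})"
    "simple_path (tri_path gam x y z +++ orp gam y x)"
    "pathfinish (tri_path gam x y z +++ orp gam y x) = pathstart (tri_path gam x y z +++ orp gam y x)"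
    "path_image (tri_path gam x y z +++ orp gam y x) = path_image (gam {x, y}) \<union> path_image (gam {y, z}) \<union> path_image (gam {x, z})"
proof -
  have e': "{z, y} \<in> E" "{y, x} \<in> E" using e by (auto simp: insert_commute)
  note o1 = orp_props[OF G e(2) d(2)]
  note o2 = orp_props[OF G e'(1) d(3)[symmetric]]
  note o3 = orp_props[OF G e'(2) d(1)[symmetric]]
  have zy: "{z, y} = {y, z}" "{y, x} = {x, y}" by auto
  have i12: "path_image (gam {x, z}) \<inter> path_image (gam {y, z}) \<subseteq> {z}"
  proof -
    have "{x, z} \<noteq> {y, z}" using d by (auto simp: doubleton_eq_iff)
    then show ?thesis using PG_disj[OF G e(2) e(3)] d by auto
  qed
  have i13: "path_image (gam {x, z}) \<inter> path_image (gam {x, y}) \<subseteq> {x}"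
  proof -
    have "{x, z} \<noteq> {x, y}" using d by (auto simp: doubleton_eq_iff)
    then show ?thesis using PG_disj[OF G e(2) e(1)] d by auto
  qed
  have i23: "path_image (gam {y, z}) \<inter> path_image (gam {x, y}) \<subseteq> {y}"
  proof -
    have "{y, z} \<noteq> {x, y}" using d by (auto simp: doubleton_eq_iff)
    then show ?thesis using PG_disj[OF G e(3) e(1)] d by auto
  qed
  show a: "arc (tri_path gam x y z)" unfolding tri_path_def
    using o1 o2 i12 zy by (intro arc_join) auto
  show s: "pathstart (tri_path gam x y z) = x" unfolding tri_path_def using o1 by simp
  show f: "pathfinish (tri_path gam x y z) = y" unfolding tri_path_def using o2 by simp
  show im: "path_image (tri_path gam x y z) = path_image (gam {x, z}) \<union> path_image (gam {y, z})"
    unfolding tri_path_def using o1 o2 zy by (simp add: path_image_join)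
  show "simple_path (tri_path gam x y z +++ orp gam y x)"
    using a s f im o3 i13 i23 zy by (intro simple_path_join_loop) auto
  show "pathfinish (tri_path gam x y z +++ orp gam y x) = pathstart (tri_path gam x y z +++ orp gam y x)"
    using s o3 by simp
  show "path_image (tri_path gam x y z +++ orp gam y x) = path_image (gam {x, y}) \<union> path_image (gam {y, z}) \<union> path_image (gam {x, z})"
    using im f o3 zy by (auto simp: path_image_join)
qed


lemma arc_in_drawing: "e \<in> E \<Longrightarrow> path_image (gam e) \<subseteq> drawing V E gam"
  unfolding drawing_def by blast

lemma cell_tri_facts:
  assumes CA: "comb_annulus V E gam J1 J2" and C: "C \<in> cells V E gam J1 J2"
    and e: "{x, y} \<in> E" "{x, z} \<in> E" "{y, z} \<in> E" and d: "x \<noteq> y" "z \<noteq> x" "z \<noteq> y"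
    and fr: "frontier C = path_image (gam {x, y}) \<union> path_image (gam {y, z}) \<union> path_image (gam {x, z})"
  shows "C = inside (path_image (tri_path gam x y z +++ orp gam y x))"
    "\<And>w. w \<in> C \<Longrightarrow> winding_number (tri_path gam x y z +++ orp gam y x) w \<noteq> 0"
    "\<And>w C'. C' \<in> cells V E gam J1 J2 \<Longrightarrow> C' \<noteq> C \<Longrightarrow> w \<in> C' \<Longrightarrow> winding_number (tri_path gam x y z +++ orp gam y x) w = 0"
proof -
  have G: "planar_graph V E gam" using CA_PG[OF CA] .
  note tp = tri_props[OF G e d(1) d(2)[symmetric] d(3)[symmetric]]
  let ?\<Gamma> = "tri_path gam x y z +++ orp gam y x"
  have im: "path_image ?\<Gamma> = frontier C" using tp(7) fr by simp
  show Ci: "C = inside (path_image ?\<Gamma>)" using cell_inside[OF CA C tp(5) tp(6) im] .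
  show "winding_number ?\<Gamma> w \<noteq> 0" if "w \<in> C" for w
  proof -
    have "norm (winding_number ?\<Gamma> w) = 1"
      using simple_closed_path_norm_winding_number_inside[OF tp(5)] that Ci by blast
    then show ?thesis by auto
  qed
  show "winding_number ?\<Gamma> w = 0" if C': "C' \<in> cells V E gam J1 J2" "C' \<noteq> C" "w \<in> C'" for w C'
  proof -
    have "C' \<inter> C = {}" using components_nonoverlap C C' unfolding cells_def by blast
    then have "w \<notin> inside (path_image ?\<Gamma>)" using Ci C' by blast
    moreover have "w \<notin> path_image ?\<Gamma>"
    proof -
      have "path_image ?\<Gamma> \<subseteq> drawing V E gam" using tp(7) e arc_in_drawing[of _ E gam V] by blast
      then show ?thesis using cell_basic(4)[OF CA C'(1)] C'(3) by blast
    qed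
    ultimately have "w \<in> outside (path_image ?\<Gamma>)" using inside_Un_outside by blast
    then show ?thesis
      using winding_number_zero_in_outside[OF simple_path_imp_path[OF tp(5)] tp(6)] by blast
  qed
qed

lemma wn_split:
  assumes G: "planar_graph V E gam" and e: "{x, y} \<in> E" "{x, z} \<in> E" "{y, z} \<in> E" and d: "x \<noteq> y" "z \<noteq> x" "z \<noteq> y"
    and w: "w \<notin> drawing V E gam"
  shows "winding_number (tri_path gam x y z +++ orp gam y x) w =
         winding_number (tri_path gam x y z) w + winding_number (orp gam y x) w"
proof -
  note tp = tri_props[OF G e d(1) d(2)[symmetric] d(3)[symmetric]]
  have e': "{y, x} \<in> E" using e by (simp add: insert_commute)
  note o3 = orp_props[OF G e' d(1)[symmetric]]
  have "w \<notin> path_image (tri_path gam x y z)" using tp(4) w e arc_in_drawing[of _ E gam V] by blast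
  moreover have "w \<notin> path_image (orp gam y x)" using o3(4) e' w arc_in_drawing[of _ E gam V] by blast
  ultimately show ?thesis
    using tp(1,3) o3(1,2) by (intro winding_number_join) (auto simp: arc_imp_path)
qed

lemma three_cells:
  assumes CA: "comb_annulus V E gam J1 J2" and exy: "{x, y} \<in> E" and dxy: "x \<noteq> y"
    and C1: "C1 \<in> cells V E gam J1 J2" and C2: "C2 \<in> cells V E gam J1 J2" and C3: "C3 \<in> cells V E gam J1 J2"
    and d12: "C1 \<noteq> C2" and d13: "C1 \<noteq> C3" and d23: "C2 \<noteq> C3"
    and z1: "z1 \<noteq> x" "z1 \<noteq> y" "{x, z1} \<in> E" "{y, z1} \<in> E"
      "frontier C1 = path_image (gam {x, y}) \<union> path_image (gam {y, z1}) \<union> path_image (gam {x, z1})"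
    and z2: "z2 \<noteq> x" "z2 \<noteq> y" "{x, z2} \<in> E" "{y, z2} \<in> E"
      "frontier C2 = path_image (gam {x, y}) \<union> path_image (gam {y, z2}) \<union> path_image (gam {x, z2})"
    and z3: "z3 \<noteq> x" "z3 \<noteq> y" "{x, z3} \<in> E" "{y, z3} \<in> E"
      "frontier C3 = path_image (gam {x, y}) \<union> path_image (gam {y, z3}) \<union> path_image (gam {x, z3})"
  shows False
proof -
  have G: "planar_graph V E gam" using CA_PG[OF CA] .
  note f1 = cell_tri_facts[OF CA C1 exy z1(3) z1(4) dxy z1(1) z1(2) z1(5)]
  note f2 = cell_tri_facts[OF CA C2 exy z2(3) z2(4) dxy z2(1) z2(2) z2(5)]
  note f3 = cell_tri_facts[OF CA C3 exy z3(3) z3(4) dxy z3(1) z3(2) z3(5)]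
  note t1 = tri_props[OF G exy z1(3) z1(4) dxy z1(1)[symmetric] z1(2)[symmetric]]
  note t2 = tri_props[OF G exy z2(3) z2(4) dxy z2(1)[symmetric] z2(2)[symmetric]]
  note t3 = tri_props[OF G exy z3(3) z3(4) dxy z3(1)[symmetric] z3(2)[symmetric]]
  let ?P1 = "path_image (tri_path gam x y z1)"
  let ?P2 = "path_image (tri_path gam x y z2)"
  let ?P3 = "path_image (tri_path gam x y z3)"
  obtain p where p: "p \<in> path_image (gam {x, y})" "p \<notin> V"
  proof -
    have "infinite (path_image (gam {x, y}))" using arc_infinite PG_arc[OF G exy] by blast
    then have "path_image (gam {x, y}) - V \<noteq> {}" using PG_finite[OF G]
      by (metis Diff_eq_empty_iff finite_subset)
    then show ?thesis using that by blast
  qed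
  have notP: "p \<notin> path_image (gam {x, z}) \<union> path_image (gam {y, z})"
    if "z \<noteq> x" "z \<noteq> y" "{x, z} \<in> E" "{y, z} \<in> E" for z
  proof
    assume "p \<in> path_image (gam {x, z}) \<union> path_image (gam {y, z})"
    then have "{x, y} = {x, z} \<or> {x, y} = {y, z}" using PG_inter[OF G exy _ p(1) _ p(2)] that by blast
    then show False using that dxy by (auto simp: doubleton_eq_iff)
  qed
  have pS: "p \<notin> ?P1 \<union> ?P2 \<union> ?P3" using notP[OF z1(1-4)] notP[OF z2(1-4)] notP[OF z3(1-4)] t1(4) t2(4) t3(4) by blast
  have cS: "closed (?P1 \<union> ?P2 \<union> ?P3)" using t1(1) t2(1) t3(1) arc_closed by blast
  obtain r where r: "r > 0" "ball p r \<subseteq> - (?P1 \<union> ?P2 \<union> ?P3)"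
    using open_contains_ball[of "- (?P1 \<union> ?P2 \<union> ?P3)"] cS pS by (metis ComplI open_Compl)
  have near: "\<exists>w\<in>C. w \<in> ball p r" if "C \<in> cells V E gam J1 J2" "path_image (gam {x, y}) \<subseteq> frontier C" for C
  proof -
    have "p \<in> closure C" using that p frontier_def by (metis Diff_iff subsetD)
    then obtain w where "w \<in> C" "dist w p < r" using closure_approachable r(1) by blast
    then show ?thesis by (auto simp: dist_commute)
  qed
  obtain w1 where w1: "w1 \<in> C1" "w1 \<in> ball p r" using near[OF C1] z1(5) by blast
  obtain w2 where w2: "w2 \<in> C2" "w2 \<in> ball p r" using near[OF C2] z2(5) by blast
  have wd: "w \<notin> drawing V E gam" if "w \<in> C" "C \<in> cells V E gam J1 J2" for w C
    using cell_basic(4)[OF CA that(2)] that(1) by blast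
  define D where "D w = winding_number (tri_path gam x y z2) w - winding_number (tri_path gam x y z3) w" for w
  have Dw: "D w = winding_number (tri_path gam x y z2 +++ orp gam y x) w - winding_number (tri_path gam x y z3 +++ orp gam y x) w"
    if "w \<notin> drawing V E gam" for w
    using wn_split[OF G exy z2(3) z2(4) dxy z2(1) z2(2) that] wn_split[OF G exy z3(3) z3(4) dxy z3(1) z3(2) that]
    by (simp add: D_def)
  let ?L = "tri_path gam x y z2 +++ reversepath (tri_path gam x y z3)"
  have pL: "path ?L" using t2(1,3) t3(1,3) by (auto simp: arc_imp_path)
  have lL: "pathfinish ?L = pathstart ?L" using t2(2) t3(2) by simp
  have imL: "path_image ?L = ?P2 \<union> ?P3" using t2(3) t3(3) by (simp add: path_image_join)
  have DL: "D w = winding_number ?L w" if "w \<in> ball p r" for w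
  proof -
    have "w \<notin> ?P2" "w \<notin> ?P3" using that r(2) by auto
    then show ?thesis unfolding D_def using t2(1,3) t3(1,3)
      by (subst winding_number_join) (auto simp: arc_imp_path winding_number_reversepath)
  qed
  have "winding_number ?L constant_on ball p r"
    by (rule winding_number_constant[OF pL lL]) (use r(2) imL in auto)
  then have DC: "D w1 = D w2" using DL w1(2) w2(2) unfolding constant_on_def by metis
  have "D w1 = 0"
    using Dw[OF wd[OF w1(1) C1]] f2(3)[OF C1 d12 w1(1)] f3(3)[OF C1 d13 w1(1)] by simp
  moreover have "D w2 \<noteq> 0"
    using Dw[OF wd[OF w2(1) C2]] f2(2)[OF w2(1)] f3(3)[OF C2 d23 w2(1)] by simp
  ultimately show False using DC by simp
qed


lemma sum_sq_le:
  fixes f :: "'a \<Rightarrow> real"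
  assumes "finite A"
  shows "(sum f A)\<^sup>2 \<le> real (card A) * sum (\<lambda>i. (f i)\<^sup>2) A"
proof -
  have "(sum f A)\<^sup>2 = (\<Sum>i\<in>A. \<Sum>j\<in>A. f i * f j)"
    by (simp add: power2_eq_square sum_product)
  also have "\<dots> \<le> (\<Sum>i\<in>A. \<Sum>j\<in>A. ((f i)\<^sup>2 + (f j)\<^sup>2) / 2)"
  proof (intro sum_mono)
    fix i j
    have "0 \<le> (f i - f j)\<^sup>2" by simp
    then show "f i * f j \<le> ((f i)\<^sup>2 + (f j)\<^sup>2) / 2" by (simp add: power2_diff field_simps)
  qed
  also have "\<dots> = (\<Sum>i\<in>A. real (card A) * (f i)\<^sup>2 / 2 + (\<Sum>j\<in>A. (f j)\<^sup>2) / 2)"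
    by (simp add: sum.distrib add_divide_distrib sum_divide_distrib[symmetric])
  also have "\<dots> = real (card A) * sum (\<lambda>i. (f i)\<^sup>2) A"
    by (simp add: sum.distrib sum_divide_distrib[symmetric] sum_distrib_left[symmetric])
  finally show ?thesis .
qed


lemma ref_PG: "ann_refinement V E gam J1 J2 V' E' gam' \<Longrightarrow> planar_graph V' E' gam'"
  by (simp add: ann_refinement_def)
lemma ref_VV: "ann_refinement V E gam J1 J2 V' E' gam' \<Longrightarrow> V \<subseteq> V'"
  by (simp add: ann_refinement_def)
lemma ref_V'sub: "ann_refinement V E gam J1 J2 V' E' gam' \<Longrightarrow> V' \<subseteq> V \<union> (\<Union>e\<in>E. path_image (gam e))"
  by (simp add: ann_refinement_def)

lemma ref_ws:
  assumes R: "ann_refinement V E gam J1 J2 V' E' gam'" and e: "e \<in> E"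
  shows "\<exists>x y ws. e = {x, y} \<and> ws \<noteq> [] \<and> hd ws = x \<and> last ws = y \<and>
        (\<forall>i. Suc i < length ws \<longrightarrow> {ws ! i, ws ! Suc i} \<in> E') \<and>
        (\<forall>i. 0 < i \<and> Suc i < length ws \<longrightarrow> ws ! i \<notin> V) \<and>
        (\<Union>i\<in>{i. Suc i < length ws}. path_image (gam' {ws ! i, ws ! Suc i})) = path_image (gam e)"
proof -
  have "\<forall>e\<in>E. \<exists>x y ws. e = {x, y} \<and> ws \<noteq> [] \<and> hd ws = x \<and> last ws = y \<and>
        (\<forall>i. Suc i < length ws \<longrightarrow> {ws ! i, ws ! Suc i} \<in> E') \<and>
        (\<forall>i. 0 < i \<and> Suc i < length ws \<longrightarrow> ws ! i \<notin> V) \<and>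
        (\<Union>i\<in>{i. Suc i < length ws}. path_image (gam' {ws ! i, ws ! Suc i})) = path_image (gam e)"
    using R unfolding ann_refinement_def by (elim conjE)
  then show ?thesis using e by (rule bspec)
qed

lemma ref_cell:
  assumes R: "ann_refinement V E gam J1 J2 V' E' gam'" and e: "e' \<in> E'"
  shows "\<exists>C\<in>cells V E gam J1 J2. path_image (gam' e') \<subseteq> closure C"
proof -
  have "\<forall>e'\<in>E'. \<exists>C\<in>cells V E gam J1 J2. path_image (gam' e') \<subseteq> closure C"
    using R unfolding ann_refinement_def by (elim conjE)
  then show ?thesis using e by (rule bspec)
qed

lemma eInc_sub: "eInc E' gam' gam e \<subseteq> E'" by (auto simp: eInc_def)

lemma ref_ws_eInc:
  assumes R: "ann_refinement V E gam J1 J2 V' E' gam'" and e: "e \<in> E"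
  shows "\<exists>x y ws. e = {x, y} \<and> walk (eInc E' gam' gam e) ws \<and> hd ws = x \<and> last ws = y"
proof -
  obtain x y ws where ws: "e = {x, y}" "ws \<noteq> []" "hd ws = x" "last ws = y"
    "\<forall>i. Suc i < length ws \<longrightarrow> {ws ! i, ws ! Suc i} \<in> E'"
    "(\<Union>i\<in>{i. Suc i < length ws}. path_image (gam' {ws ! i, ws ! Suc i})) = path_image (gam e)"
    using ref_ws[OF R e] by blast
  have "edge_path (eInc E' gam' gam e) ws"
    unfolding edge_path_def eInc_def using ws(2,5,6) by blast
  then have "walk (eInc E' gam' gam e) ws" by (simp add: edge_path_walk)
  then show ?thesis using ws by blast
qed

lemma eInc_disj:
  assumes R: "ann_refinement V E gam J1 J2 V' E' gam'" and G: "planar_graph V E gam"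
    and e: "e1 \<in> E" "e2 \<in> E" "e1 \<noteq> e2"
  shows "eInc E' gam' gam e1 \<inter> eInc E' gam' gam e2 = {}"
proof (rule ccontr)
  assume "\<not> ?thesis"
  then obtain e' where e': "e' \<in> E'" "path_image (gam' e') \<subseteq> path_image (gam e1)" "path_image (gam' e') \<subseteq> path_image (gam e2)"
    unfolding eInc_def by blast
  obtain u v where uv: "e' = {u, v}" "u \<noteq> v" "pathstart (gam' e') = u" "pathfinish (gam' e') = v"
    using PG_props[OF ref_PG[OF R] e'(1)] by blast
  have "u \<in> path_image (gam' e')" unfolding uv(3)[symmetric] by (rule pathstart_in_path_image)
  moreover have "v \<in> path_image (gam' e')" unfolding uv(4)[symmetric] by (rule pathfinish_in_path_image)
  ultimately
  have "u \<in> e1 \<inter> e2" "v \<in> e1 \<inter> e2" using PG_disj[OF G e] e' by blast+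
  moreover obtain a b where "e1 = {a, b}" using PG_edge[OF G e(1)] by metis
  moreover obtain c d where "e2 = {c, d}" using PG_edge[OF G e(2)] by metis
  ultimately show False using uv(2) e(3) by (auto simp: doubleton_eq_iff)
qed

lemma lift_edge:
  assumes R: "ann_refinement V E gam J1 J2 V' E' gam'" and G: "planar_graph V E gam"
    and e: "{a, c} \<in> E" and nn: "\<forall>e\<in>E'. 0 \<le> m' e"
  shows "\<exists>ws. walk E' ws \<and> hd ws = a \<and> last ws = c \<and> plen m' ws \<le> sum m' (eInc E' gam' gam {a, c})"
proof -
  let ?S = "eInc E' gam' gam {a, c}"
  obtain x y ws where ws: "{a, c} = {x, y}" "walk ?S ws" "hd ws = x" "last ws = y"
    using ref_ws_eInc[OF R e] by blast
  have "\<exists>ws1. walk ?S ws1 \<and> hd ws1 = a \<and> last ws1 = c"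
  proof (cases "a = x")
    case True
    then have "c = y" using ws(1) by (metis doubleton_eq_iff)
    then show ?thesis using ws True by blast
  next
    case False
    then have "a = y" "c = x" using ws(1) by (metis doubleton_eq_iff)+
    moreover have "walk ?S (rev ws)" using walk_rev[OF ws(2)] .
    moreover have "hd (rev ws) = y" "last (rev ws) = x" using ws walk_ne[OF ws(2)]
      by (auto simp: hd_rev last_rev)
    ultimately show ?thesis by blast
  qed
  then obtain ws1 where ws1: "walk ?S ws1" "hd ws1 = a" "last ws1 = c" by blast
  obtain ws2 where ws2: "walk ?S ws2" "distinct ws2" "hd ws2 = a" "last ws2 = c"
    using walk_distinctify[OF ws1(1)] ws1 by auto
  have fS: "finite ?S" using finite_subset[OF eInc_sub PG_finite_E[OF ref_PG[OF R]]] .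
  have "plen m' ws2 \<le> sum m' ?S"
    using plen_distinct_le[OF ws2(1,2) fS] nn eInc_sub by blast
  moreover have "walk E' ws2" using walk_mono[OF ws2(1) eInc_sub] .
  ultimately show ?thesis using ws2 by blast
qed

lemma lift_walk:
  assumes R: "ann_refinement V E gam J1 J2 V' E' gam'" and G: "planar_graph V E gam"
    and nn: "\<forall>e\<in>E'. 0 \<le> m' e" and w: "walk E ws"
  shows "\<exists>ws'. walk E' ws' \<and> hd ws' = hd ws \<and> last ws' = last ws \<and>
    plen m' ws' \<le> plen (\<lambda>e. sum m' (eInc E' gam' gam e)) ws"
  using w
proof (induction ws rule: induct_list012)
  case 1
  then show ?case by simp
next
  case (2 x)
  then show ?case by (intro exI[of _ "[x]"]) simp
next
  case (3 x y zs)
  have exy: "{x, y} \<in> E" and wy: "walk E (y # zs)" using 3(3) by auto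
  obtain ws1 where ws1: "walk E' ws1" "hd ws1 = x" "last ws1 = y"
      "plen m' ws1 \<le> sum m' (eInc E' gam' gam {x, y})"
    using lift_edge[OF R G exy nn] by blast
  obtain ws2 where ws2: "walk E' ws2" "hd ws2 = y" "last ws2 = last (y # zs)"
      "plen m' ws2 \<le> plen (\<lambda>e. sum m' (eInc E' gam' gam e)) (y # zs)"
    using 3(2)[OF wy] by auto
  have ne1: "ws1 \<noteq> []" and ne2: "ws2 \<noteq> []" using ws1(1) ws2(1) by auto
  have e1: "ws1 = butlast ws1 @ [y]" using ne1 ws1(3) by (metis append_butlast_last_id)
  have e2: "ws2 = y # tl ws2" using ne2 ws2(2) by (metis list.collapse)
  define ws where "ws = butlast ws1 @ y # tl ws2"
  have a1: "walk E' (butlast ws1 @ [y])" using ws1(1) by (simp only: e1[symmetric])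
  have a2: "walk E' (y # tl ws2)" using ws2(1) by (simp only: e2[symmetric])
  have "walk E' ws" unfolding ws_def using walk_append[THEN iffD2] a1 a2 by blast
  moreover have "plen m' ws = plen m' ws1 + plen m' ws2"
  proof -
    have "plen m' ws = plen m' (butlast ws1 @ [y]) + plen m' (y # tl ws2)"
      unfolding ws_def by (rule plen_append)
    then show ?thesis by (simp only: e1[symmetric] e2[symmetric])
  qed
  moreover have "hd ws = x"
  proof (cases "butlast ws1 = []")
    case True
    have "ws1 = [y]" by (subst e1) (simp add: True)
    then show ?thesis using ws1(2) True by (simp add: ws_def)
  next
    case False
    have "hd ws = hd (butlast ws1)" unfolding ws_def using False by (rule hd_append2)
    moreover have "hd ws1 = hd (butlast ws1)"
    proof -
      have "hd (butlast ws1 @ [y]) = hd (butlast ws1)" using False by (rule hd_append2)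
      then show ?thesis by (simp only: e1[symmetric])
    qed
    ultimately show ?thesis using ws1(2) by simp
  qed
  moreover have "last ws = last (x # y # zs)"
  proof -
    have "last ws = last (y # tl ws2)" unfolding ws_def by (simp add: last_append)
    moreover have "last (y # tl ws2) = last ws2" by (simp only: e2[symmetric])
    ultimately show ?thesis using ws2(3) by simp
  qed
  ultimately show ?case using ws1(4) ws2(4) by (intro exI[of _ ws]) auto
qed


lemma A_path:
  assumes CA: "comb_annulus V E gam J1 J2"
  shows "\<exists>ws. walk E ws \<and> hd ws \<in> V \<inter> path_image J1 \<and> last ws \<in> V \<inter> path_image J2"
proof -
  have G: "planar_graph V E gam" using CA_PG[OF CA] .
  obtain a where a: "a \<in> V \<inter> path_image J1"
    using J_meets_V[OF G] CA_J1[OF CA] CA_Jsub[OF CA] by blast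
  obtain b where b: "b \<in> V \<inter> path_image J2"
    using J_meets_V[OF G] CA_J2[OF CA] CA_Jsub[OF CA] by blast
  have "\<forall>x\<in>V. \<forall>y\<in>V. (x, y) \<in> {(u, v). {u, v} \<in> E}\<^sup>*"
    using PG_connected[OF G] unfolding graph_connected_def .
  then have "(a, b) \<in> {(u, v). {u, v} \<in> E}\<^sup>*" using a b by simp
  then obtain ws where "walk E ws" "hd ws = a" "last ws = b" using walk_rtrancl by blast
  then show ?thesis using a b by blast
qed

lemma walk_two: "walk S ws \<Longrightarrow> hd ws \<noteq> last ws \<Longrightarrow> S \<noteq> {}"
  by (induction S ws rule: walk.induct) auto

lemma partI:
  assumes CA: "comb_annulus V E gam J1 J2" and R: "ann_refinement V E gam J1 J2 V' E' gam'"
    and WB: "weakly_bounded b E gam E' gam'"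
  shows "EEL E' (V' \<inter> path_image J1) (V' \<inter> path_image J2) \<le> (real b + 1) * EEL E (V \<inter> path_image J1) (V \<inter> path_image J2)"
proof -
  have G: "planar_graph V E gam" using CA_PG[OF CA] .
  have G': "planar_graph V' E' gam'" using ref_PG[OF R] .
  have fE: "finite E" using PG_finite_E[OF G] .
  have fE': "finite E'" using PG_finite_E[OF G'] .
  have VV: "V \<subseteq> V'" using ref_VV[OF R] .
  have dJ: "path_image J1 \<inter> path_image J2 = {}" using J1J2_disj[OF CA] .
  obtain ws0 where ws0: "walk E ws0" "hd ws0 \<in> V \<inter> path_image J1" "last ws0 \<in> V \<inter> path_image J2"
    using A_path[OF CA] by blast
  have PA: "Ps E (V \<inter> path_image J1) (V \<inter> path_image J2) \<noteq> {}" using ws0 by (auto simp: Ps_def)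
  have hl: "hd ws0 \<noteq> last ws0" using ws0(2,3) dJ by auto
  have neE: "E \<noteq> {}" using walk_two[OF ws0(1) hl] .
  obtain ws1 where ws1: "walk E' ws1" "hd ws1 = hd ws0" "last ws1 = last ws0"
    using lift_walk[OF R G _ ws0(1), of "\<lambda>_. 0"] by auto
  have "ws1 \<in> Ps E' (V' \<inter> path_image J1) (V' \<inter> path_image J2)" using ws0 ws1 VV by (auto simp: Ps_def)
  then have PA': "Ps E' (V' \<inter> path_image J1) (V' \<inter> path_image J2) \<noteq> {}" by blast
  have neE': "E' \<noteq> {}" using walk_two[OF ws1(1)] ws1(2,3) hl by simp
  show ?thesis
  proof (rule GC[OF fE' fE PA' PA neE' neE])
    show "0 < real b + 1" by simp
  next
    fix m' assume adm: "adm E' m'"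
    have nn: "\<forall>e\<in>E'. 0 \<le> m' e" using adm by (simp add: adm_def)
    define m where "m e = sum m' (eInc E' gam' gam e)" for e
    have fI: "finite (eInc E' gam' gam e)" for e using finite_subset[OF eInc_sub fE'] .
    have mnn: "\<forall>e\<in>E. 0 \<le> m e" unfolding m_def using nn eInc_sub by (meson sum_nonneg subsetD)
    have "metric_area E m \<le> (\<Sum>e\<in>E. real b * (\<Sum>e'\<in>eInc E' gam' gam e. (m' e')\<^sup>2))"
      unfolding metric_area_def m_def
    proof (rule sum_mono)
      fix e assume e: "e \<in> E"
      have "(sum m' (eInc E' gam' gam e))\<^sup>2 \<le> real (card (eInc E' gam' gam e)) * (\<Sum>e'\<in>eInc E' gam' gam e. (m' e')\<^sup>2)"
        using sum_sq_le[OF fI] .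
      also have "\<dots> \<le> real b * (\<Sum>e'\<in>eInc E' gam' gam e. (m' e')\<^sup>2)"
        using WB e unfolding weakly_bounded_def by (intro mult_right_mono) (auto simp: sum_nonneg)
      finally show "(sum m' (eInc E' gam' gam e))\<^sup>2 \<le> real b * (\<Sum>e'\<in>eInc E' gam' gam e. (m' e')\<^sup>2)" .
    qed
    also have "\<dots> = real b * (\<Sum>e'\<in>(\<Union>e\<in>E. eInc E' gam' gam e). (m' e')\<^sup>2)"
      by (subst sum.UNION_disjoint) (use fE fI eInc_disj[OF R G] in \<open>auto simp: sum_distrib_left\<close>)
    also have "\<dots> \<le> real b * metric_area E' m'"
      unfolding metric_area_def using fE' eInc_sub[of E' gam' gam]
      by (intro mult_left_mono sum_mono2) auto
    also have "\<dots> \<le> (real b + 1) * metric_area E' m'"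
      using area_nonneg[of E' m'] by (simp add: algebra_simps)
    finally have ar: "metric_area E m \<le> (real b + 1) * metric_area E' m'" .
    have il: "infl E' (V' \<inter> path_image J1) (V' \<inter> path_image J2) m' \<le> infl E (V \<inter> path_image J1) (V \<inter> path_image J2) m"
    proof (rule le_infl[OF PA])
      fix ws assume ws: "ws \<in> Ps E (V \<inter> path_image J1) (V \<inter> path_image J2)"
      obtain ws' where ws': "walk E' ws'" "hd ws' = hd ws" "last ws' = last ws" "plen m' ws' \<le> plen m ws"
        using lift_walk[OF R G nn, of ws] ws unfolding m_def Ps_def by auto
      have "ws' \<in> Ps E' (V' \<inter> path_image J1) (V' \<inter> path_image J2)" using ws ws' VV by (auto simp: Ps_def)
      then have "infl E' (V' \<inter> path_image J1) (V' \<inter> path_image J2) m' \<le> plen m' ws'" using infl_le nn by blast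
      then show "infl E' (V' \<inter> path_image J1) (V' \<inter> path_image J2) m' \<le> plen m ws" using ws'(4) by linarith
    qed
    show "\<exists>mt. (\<forall>e\<in>E. 0 \<le> mt e) \<and> metric_area E mt \<le> (real b + 1) * metric_area E' m' \<and>
       infl E' (V' \<inter> path_image J1) (V' \<inter> path_image J2) m' \<le> infl E (V \<inter> path_image J1) (V \<inter> path_image J2) mt"
      using mnn ar il by blast
  qed
qed


fun pj :: "(complex \<Rightarrow> complex) \<Rightarrow> complex list \<Rightarrow> complex list" where
  "pj f [] = []"
| "pj f [x] = [f x]"
| "pj f (x # y # xs) = (if f x = f y then pj f (y # xs) else f x # pj f (y # xs))"

lemma pj_hd: "pj f (x # xs) = f x # tl (pj f (x # xs))"
  by (induction f "x # xs" arbitrary: x xs rule: pj.induct) auto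

lemma pj_last: "ws \<noteq> [] \<Longrightarrow> last (pj f ws) = f (last ws)"
proof (induction f ws rule: pj.induct)
  case (3 f x y xs)
  have "pj f (y # xs) \<noteq> []" by (subst pj_hd) simp
  then show ?case using 3 by auto
qed auto

lemma pj_walk:
  assumes w: "walk E' ws" and ch: "\<And>u v. {u, v} \<in> E' \<Longrightarrow> f u = f v \<or> {f u, f v} \<in> E"
    and nn: "\<forall>e\<in>E. 0 \<le> m e"
  shows "walk E (pj f ws) \<and> plen m (pj f ws) \<le> plen (\<lambda>e'. if f ` e' \<in> E then m (f ` e') else 0) ws"
  using w
proof (induction ws rule: induct_list012)
  case 1 then show ?case by simp
next
  case (2 x) then show ?case by simp
next
  case (3 x y zs)
  let ?m' = "\<lambda>e'. if f ` e' \<in> E then m (f ` e') else 0"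
  have exy: "{x, y} \<in> E'" and wy: "walk E' (y # zs)" using 3(3) by auto
  have IH: "walk E (pj f (y # zs))" "plen m (pj f (y # zs)) \<le> plen ?m' (y # zs)" using 3(2)[OF wy] by auto
  have m'nn: "0 \<le> ?m' {x, y}" using nn by auto
  show ?case
  proof (cases "f x = f y")
    case True
    then show ?thesis using IH m'nn by simp
  next
    case False
    then have fe: "{f x, f y} \<in> E" using ch[OF exy] by blast
    have im: "f ` {x, y} = {f x, f y}" by simp
    have eq: "pj f (y # zs) = f y # tl (pj f (y # zs))" by (rule pj_hd)
    have "walk E (f x # f y # tl (pj f (y # zs)))" using fe IH(1) eq by (metis walk.simps(3))
    moreover have "plen m (f x # f y # tl (pj f (y # zs))) = m {f x, f y} + plen m (pj f (y # zs))"
      using eq by (metis plen.simps(3))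
    ultimately show ?thesis using False IH(2) fe im eq by (simp del: pj.simps(3)) (simp add: False)
  qed
qed


definition prj :: "complex set \<Rightarrow> complex set set \<Rightarrow> (complex set \<Rightarrow> real \<Rightarrow> complex) \<Rightarrow> complex \<Rightarrow> complex" where
  "prj V E gam v = (if v \<in> V then v else (SOME x. \<exists>g\<in>E. v \<in> path_image (gam g) \<and> x \<in> g))"

lemma prj_props:
  assumes CA: "comb_annulus V E gam J1 J2" and R: "ann_refinement V E gam J1 J2 V' E' gam'" and v: "v \<in> V'"
  shows "prj V E gam v \<in> V"
    "v \<notin> V \<Longrightarrow> \<exists>g\<in>E. v \<in> path_image (gam g) \<and> prj V E gam v \<in> g"
    "v \<in> path_image J1 \<Longrightarrow> prj V E gam v \<in> path_image J1"
    "v \<in> path_image J2 \<Longrightarrow> prj V E gam v \<in> path_image J2"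
proof -
  have G: "planar_graph V E gam" using CA_PG[OF CA] .
  have ex: "\<exists>g\<in>E. v \<in> path_image (gam g) \<and> prj V E gam v \<in> g" if nv: "v \<notin> V"
  proof -
    obtain g where g: "g \<in> E" "v \<in> path_image (gam g)" using ref_V'sub[OF R] v nv by blast
    obtain a b where "g = {a, b}" using PG_edge[OF G g(1)] by metis
    then have "\<exists>x. \<exists>g\<in>E. v \<in> path_image (gam g) \<and> x \<in> g" using g by blast
    then have "\<exists>g\<in>E. v \<in> path_image (gam g) \<and> (SOME x. \<exists>g\<in>E. v \<in> path_image (gam g) \<and> x \<in> g) \<in> g"
      by (rule someI_ex)
    then show ?thesis using nv by (simp add: prj_def)
  qed
  show "v \<notin> V \<Longrightarrow> \<exists>g\<in>E. v \<in> path_image (gam g) \<and> prj V E gam v \<in> g" using ex by blast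
  show "prj V E gam v \<in> V"
  proof (cases "v \<in> V")
    case True then show ?thesis by (simp add: prj_def)
  next
    case False then show ?thesis using ex PG_edge_sub[OF G] by blast
  qed
  show "prj V E gam v \<in> path_image J1" if "v \<in> path_image J1"
  proof (cases "v \<in> V")
    case True then show ?thesis using that by (simp add: prj_def)
  next
    case False
    then obtain g where g: "g \<in> E" "v \<in> path_image (gam g)" "prj V E gam v \<in> g" using ex by blast
    have "g \<subseteq> path_image J1"
      using TL[OF G _ _ _ g(1) that g(2) False] CA_J1[OF CA] CA_Jsub[OF CA] by blast
    then show ?thesis using g(3) by blast
  qed
  show "prj V E gam v \<in> path_image J2" if "v \<in> path_image J2"
  proof (cases "v \<in> V")
    case True then show ?thesis using that by (simp add: prj_def)
  next
    case False
    then obtain g where g: "g \<in> E" "v \<in> path_image (gam g)" "prj V E gam v \<in> g" using ex by blast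
    have "g \<subseteq> path_image J2"
      using TL[OF G _ _ _ g(1) that g(2) False] CA_J2[OF CA] CA_Jsub[OF CA] by blast
    then show ?thesis using g(3) by blast
  qed
qed


lemma prj_tri:
  assumes CA: "comb_annulus V E gam J1 J2" and R: "ann_refinement V E gam J1 J2 V' E' gam'"
    and u: "u \<in> V'" and fr: "u \<in> path_image (gam {a, b}) \<union> path_image (gam {b, c}) \<union> path_image (gam {a, c})"
    and e: "{a, b} \<in> E" "{b, c} \<in> E" "{a, c} \<in> E"
  shows "\<exists>h\<in>{{a, b}, {b, c}, {a, c}}. u \<in> path_image (gam h) \<and> prj V E gam u \<in> h \<and> u \<in> h \<union> vInc V' gam h"
proof -
  have G: "planar_graph V E gam" using CA_PG[OF CA] .
  obtain h where h: "h \<in> {{a, b}, {b, c}, {a, c}}" "u \<in> path_image (gam h)" using fr by blast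
  have hE: "h \<in> E" using h(1) e by blast
  show ?thesis
  proof (cases "u \<in> V")
    case True
    then have "u \<in> h" using PG_arc_V[OF G hE] h(2) by blast
    moreover have "prj V E gam u = u" using True by (simp add: prj_def)
    ultimately have "u \<in> path_image (gam h) \<and> prj V E gam u \<in> h \<and> u \<in> h \<union> vInc V' gam h" using h(2) by simp
    then show ?thesis by (rule bexI[OF _ h(1)])
  next
    case False
    obtain g where g: "g \<in> E" "u \<in> path_image (gam g)" "prj V E gam u \<in> g" using prj_props(2)[OF CA R u False] by blast
    have "g = h" using PG_inter[OF G g(1) hE g(2) h(2) False] .
    moreover have "u \<in> vInc V' gam h" unfolding vInc_def using u h(2) False PG_edge_sub[OF G hE] by blast
    ultimately have "u \<in> path_image (gam h) \<and> prj V E gam u \<in> h \<and> u \<in> h \<union> vInc V' gam h" using h(2) g(3) by simp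
    then show ?thesis by (rule bexI[OF _ h(1)])
  qed
qed

lemma prj_tri_vert:
  assumes CA: "comb_annulus V E gam J1 J2" and R: "ann_refinement V E gam J1 J2 V' E' gam'"
    and u: "u \<in> V'" and fr: "u \<in> path_image (gam {a, b}) \<union> path_image (gam {b, c}) \<union> path_image (gam {a, c})"
    and e: "{a, b} \<in> E" "{b, c} \<in> E" "{a, c} \<in> E"
  shows "prj V E gam u \<in> {a, b, c}"
proof -
  obtain h where h: "h \<in> {{a, b}, {b, c}, {a, c}}" "prj V E gam u \<in> h"
    using prj_tri[OF CA R u fr e] by blast
  from h(1) have "h = {a, b} \<or> h = {b, c} \<or> h = {a, c}" by simp
  then show ?thesis using h(2) by (elim disjE) auto
qed

lemma drawing_V': "ann_refinement V E gam J1 J2 V' E' gam' \<Longrightarrow> V' \<subseteq> drawing V E gam"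
  unfolding drawing_def by (rule ref_V'sub)

lemma rA_edge_cell:
  assumes CA: "comb_annulus V E gam J1 J2" and R: "ann_refinement V E gam J1 J2 V' E' gam'"
    and e': "{u, v} \<in> E'"
  obtains C a b c where "C \<in> cells V E gam J1 J2" "path_image (gam' {u, v}) \<subseteq> closure C"
    "a \<noteq> b" "b \<noteq> c" "a \<noteq> c" "{a, b} \<in> E" "{b, c} \<in> E" "{a, c} \<in> E"
    "frontier C = path_image (gam {a, b}) \<union> path_image (gam {b, c}) \<union> path_image (gam {a, c})"
    "u \<in> frontier C" "v \<in> frontier C" "u \<in> V'" "v \<in> V'"
proof -
  have G': "planar_graph V' E' gam'" using ref_PG[OF R] .
  obtain C where C: "C \<in> cells V E gam J1 J2" "path_image (gam' {u, v}) \<subseteq> closure C"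
    using ref_cell[OF R e'] by blast
  obtain a b c where abc: "a \<noteq> b" "b \<noteq> c" "a \<noteq> c" "{a, b} \<in> E" "{b, c} \<in> E" "{a, c} \<in> E"
    "frontier C = path_image (gam {a, b}) \<union> path_image (gam {b, c}) \<union> path_image (gam {a, c})"
    using CA_tri[OF CA C(1)] by blast
  have uv: "u \<in> V'" "v \<in> V'" using PG_edge_sub[OF G' e'] by auto
  have "u \<in> path_image (gam' {u, v})" "v \<in> path_image (gam' {u, v})" using PG_ends[OF G' e'] by auto
  then have fr: "u \<in> frontier C" "v \<in> frontier C"
    using cell_frontier[OF CA C(1)] C(2) drawing_V'[OF R] uv by blast+
  show ?thesis by (rule that[OF C(1,2) abc fr uv])
qed

lemma chord:
  assumes CA: "comb_annulus V E gam J1 J2" and R: "ann_refinement V E gam J1 J2 V' E' gam'"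
    and e': "{u, v} \<in> E'"
  shows "prj V E gam u = prj V E gam v \<or> {prj V E gam u, prj V E gam v} \<in> E"
proof -
  obtain C a b c where C: "C \<in> cells V E gam J1 J2" "path_image (gam' {u, v}) \<subseteq> closure C"
    "a \<noteq> b" "b \<noteq> c" "a \<noteq> c" "{a, b} \<in> E" "{b, c} \<in> E" "{a, c} \<in> E"
    "frontier C = path_image (gam {a, b}) \<union> path_image (gam {b, c}) \<union> path_image (gam {a, c})"
    "u \<in> frontier C" "v \<in> frontier C" "u \<in> V'" "v \<in> V'"
    by (rule rA_edge_cell[OF CA R e'])
  have "u \<in> path_image (gam {a, b}) \<union> path_image (gam {b, c}) \<union> path_image (gam {a, c})" using C(9,10) by simp
  then have "prj V E gam u \<in> {a, b, c}" using prj_tri_vert[OF CA R C(12) _ C(6,7,8)] by blast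
  moreover have "v \<in> path_image (gam {a, b}) \<union> path_image (gam {b, c}) \<union> path_image (gam {a, c})" using C(9,11) by simp
  then have "prj V E gam v \<in> {a, b, c}" using prj_tri_vert[OF CA R C(13) _ C(6,7,8)] by blast
  moreover have "{b, a} \<in> E" "{c, b} \<in> E" "{c, a} \<in> E" using C(6,7,8) by (simp_all add: insert_commute)
  ultimately show ?thesis using C(6,7,8) by (elim insertE; simp)
qed


lemma card_UN_bound:
  assumes "finite I" "card I \<le> n" "\<And>i. i \<in> I \<Longrightarrow> card (A i) \<le> k"
  shows "card (\<Union>i\<in>I. A i) \<le> n * k"
proof -
  have "card (\<Union>i\<in>I. A i) \<le> (\<Sum>i\<in>I. card (A i))" using card_UN_le[OF assms(1)] .
  also have "\<dots> \<le> card I * k" using sum_bounded_above[of I "\<lambda>i. card (A i)" k] assms(3) by simp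
  also have "\<dots> \<le> n * k" using assms(2) by simp
  finally show ?thesis .
qed

lemma card_doubleton_le: "card {p, q} \<le> 2"
  by (simp add: card_insert_if)

lemma le2:
  assumes "\<And>a b c. a \<in> S \<Longrightarrow> b \<in> S \<Longrightarrow> c \<in> S \<Longrightarrow> a \<noteq> b \<Longrightarrow> a \<noteq> c \<Longrightarrow> b \<noteq> c \<Longrightarrow> False"
  shows "finite S \<and> card S \<le> 2"
proof (cases "S = {}")
  case True then show ?thesis by simp
next
  case False
  then obtain a where a: "a \<in> S" by blast
  show ?thesis
  proof (cases "S \<subseteq> {a}")
    case True
    then show ?thesis using finite_subset[OF True] card_mono[OF _ True] by simp
  next
    case False
    then obtain b where b: "b \<in> S" "b \<noteq> a" by blast
    have sub: "S \<subseteq> {a, b}" using assms a b by blast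
    then show ?thesis using finite_subset[OF sub] card_mono[OF _ sub] card_doubleton_le[of a b] by simp
  qed
qed

lemma vInc_sub:
  assumes R: "ann_refinement V E gam J1 J2 V' E' gam'" and h: "h \<in> E"
  shows "vInc V' gam h \<subseteq> \<Union> (eInc E' gam' gam h)"
proof
  fix w assume w: "w \<in> vInc V' gam h"
  have G': "planar_graph V' E' gam'" using ref_PG[OF R] .
  obtain x y ws where ws: "h = {x, y}"
    "\<forall>i. Suc i < length ws \<longrightarrow> {ws ! i, ws ! Suc i} \<in> E'"
    "(\<Union>i\<in>{i. Suc i < length ws}. path_image (gam' {ws ! i, ws ! Suc i})) = path_image (gam h)"
    using ref_ws[OF R h] by blast
  have "w \<in> path_image (gam h)" "w \<in> V'" using w by (auto simp: vInc_def)
  then obtain i where i: "Suc i < length ws" "w \<in> path_image (gam' {ws ! i, ws ! Suc i})" using ws(3) by blast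
  have eE: "{ws ! i, ws ! Suc i} \<in> E'" using ws(2) i(1) by blast
  have "w \<in> {ws ! i, ws ! Suc i}" using PG_arc_V[OF G' eE] i(2) \<open>w \<in> V'\<close> by blast
  moreover have "{ws ! i, ws ! Suc i} \<in> eInc E' gam' gam h"
    unfolding eInc_def using eE ws(3) i(1) by blast
  ultimately show "w \<in> \<Union> (eInc E' gam' gam h)" by blast
qed

lemma hv_card:
  assumes CA: "comb_annulus V E gam J1 J2" and R: "ann_refinement V E gam J1 J2 V' E' gam'"
    and WB: "weakly_bounded b E gam E' gam'" and h: "h \<in> E"
  shows "finite (h \<union> vInc V' gam h) \<and> card (h \<union> vInc V' gam h) \<le> 2 + 2 * b"
proof -
  have G: "planar_graph V E gam" using CA_PG[OF CA] .
  have G': "planar_graph V' E' gam'" using ref_PG[OF R] .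
  have fI: "finite (eInc E' gam' gam h)" using finite_subset[OF eInc_sub PG_finite_E[OF G']] .
  have cI: "card (eInc E' gam' gam h) \<le> b" using WB h by (simp add: weakly_bounded_def)
  have "card (\<Union> (eInc E' gam' gam h)) \<le> card (eInc E' gam' gam h) * 2"
  proof -
    have "card (\<Union>e\<in>eInc E' gam' gam h. e) \<le> card (eInc E' gam' gam h) * 2"
    proof (rule card_UN_bound[OF fI order_refl])
      fix e assume "e \<in> eInc E' gam' gam h"
      then have "e \<in> E'" using eInc_sub by blast
      then obtain p q where "e = {p, q}" using PG_edge[OF G' \<open>e \<in> E'\<close>] by metis
      then show "card e \<le> 2" using card_doubleton_le by simp
    qed
    then show ?thesis by simp
  qed
  moreover have "finite (\<Union> (eInc E' gam' gam h))"
  proof -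
    have "\<forall>e\<in>eInc E' gam' gam h. finite e"
    proof
      fix e assume "e \<in> eInc E' gam' gam h"
      then have "e \<in> E'" using eInc_sub by blast
      then obtain p q where "e = {p, q}" using PG_edge[OF G' \<open>e \<in> E'\<close>] by metis
      then show "finite e" by simp
    qed
    then show ?thesis using fI by blast
  qed
  ultimately have vc: "card (vInc V' gam h) \<le> 2 * b" "finite (vInc V' gam h)"
    using card_mono[OF _ vInc_sub[OF R h]] finite_subset[OF vInc_sub[OF R h]] cI by auto
  obtain p q where hpq: "h = {p, q}" using PG_edge[OF G h] by metis
  have "card (h \<union> vInc V' gam h) \<le> card h + card (vInc V' gam h)" by (rule card_Un_le)
  also have "\<dots> \<le> 2 + 2 * b" using vc card_doubleton_le[of p q] hpq by simp
  finally show ?thesis using vc hpq by simp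
qed

lemma H_card:
  assumes CA: "comb_annulus V E gam J1 J2" and C: "C \<in> cells V E gam J1 J2"
  shows "finite {h \<in> E. path_image (gam h) \<subseteq> frontier C} \<and> card {h \<in> E. path_image (gam h) \<subseteq> frontier C} \<le> 3"
proof -
  have G: "planar_graph V E gam" using CA_PG[OF CA] .
  obtain a b c where abc: "{a, b} \<in> E" "{b, c} \<in> E" "{a, c} \<in> E"
    "frontier C = path_image (gam {a, b}) \<union> path_image (gam {b, c}) \<union> path_image (gam {a, c})"
    using CA_tri[OF CA C] by blast
  have sub: "{h \<in> E. path_image (gam h) \<subseteq> frontier C} \<subseteq> set [{a, b}, {b, c}, {a, c}]"
  proof
    fix h assume h: "h \<in> {h \<in> E. path_image (gam h) \<subseteq> frontier C}"
    then have hE: "h \<in> E" by blast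
    have "infinite (path_image (gam h))" using arc_infinite PG_arc[OF G hE] by blast
    then have "path_image (gam h) - V \<noteq> {}" using PG_finite[OF G] by (metis Diff_eq_empty_iff finite_subset)
    then obtain p where p: "p \<in> path_image (gam h)" "p \<notin> V" by blast
    then have "p \<in> frontier C" using h by blast
    then obtain t where t: "t \<in> {{a, b}, {b, c}, {a, c}}" "p \<in> path_image (gam t)" using abc(4) by blast
    have "t \<in> E" using t(1) abc by blast
    then have "h = t" using PG_inter[OF G hE _ p(1) t(2) p(2)] by blast
    then show "h \<in> set [{a, b}, {b, c}, {a, c}]" using t(1) by simp
  qed
  have "card (set [{a, b}, {b, c}, {a, c}]) \<le> 3" using card_length[of "[{a, b}, {b, c}, {a, c}]"] by simp
  then show ?thesis using finite_subset[OF sub] card_mono[OF _ sub] by fastforce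
qed

lemma TRI:
  assumes d: "a \<noteq> b" "b \<noteq> c" "a \<noteq> c" and e: "{a, b} \<in> E" "{b, c} \<in> E" "{a, c} \<in> E"
    and xy: "x \<in> {a, b, c}" "y \<in> {a, b, c}" "x \<noteq> y"
  shows "\<exists>z. z \<noteq> x \<and> z \<noteq> y \<and> {x, z} \<in> E \<and> {y, z} \<in> E \<and>
     P {a, b} \<union> P {b, c} \<union> P {a, c} = P {x, y} \<union> P {y, z} \<union> P {x, z}"
proof -
  have e': "{b, a} \<in> E" "{c, b} \<in> E" "{c, a} \<in> E" using e by (simp_all add: insert_commute)
  have s: "{b, a} = {a, b}" "{c, b} = {b, c}" "{c, a} = {a, c}" by auto
  consider "x = a" "y = b" | "x = b" "y = a" | "x = a" "y = c" | "x = c" "y = a" | "x = b" "y = c" | "x = c" "y = b"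
    using xy by blast
  then show ?thesis
  proof cases
    case 1 then show ?thesis using d e e' by (intro exI[of _ c]) (auto simp: s)
  next
    case 2 then show ?thesis using d e e' by (intro exI[of _ c]) (auto simp: s)
  next
    case 3 then show ?thesis using d e e' by (intro exI[of _ b]) (auto simp: s)
  next
    case 4 then show ?thesis using d e e' by (intro exI[of _ b]) (auto simp: s)
  next
    case 5 then show ?thesis using d e e' by (intro exI[of _ a]) (auto simp: s)
  next
    case 6 then show ?thesis using d e e' by (intro exI[of _ a]) (auto simp: s)
  qed
qed


definition CF :: "complex set set \<Rightarrow> (complex set \<Rightarrow> real \<Rightarrow> complex) \<Rightarrow> (real \<Rightarrow> complex) \<Rightarrow> (real \<Rightarrow> complex)
   \<Rightarrow> complex set \<Rightarrow> complex \<Rightarrow> complex \<Rightarrow> complex set set" where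
  "CF E gam J1 J2 V x y = {C \<in> cells V E gam J1 J2. \<exists>z. z \<noteq> x \<and> z \<noteq> y \<and> {x, z} \<in> E \<and> {y, z} \<in> E \<and>
      frontier C = path_image (gam {x, y}) \<union> path_image (gam {y, z}) \<union> path_image (gam {x, z})}"

lemma CF_card:
  assumes CA: "comb_annulus V E gam J1 J2" and e: "{x, y} \<in> E" "x \<noteq> y"
  shows "finite (CF E gam J1 J2 V x y) \<and> card (CF E gam J1 J2 V x y) \<le> 2"
proof (rule le2)
  fix C1 C2 C3 assume C: "C1 \<in> CF E gam J1 J2 V x y" "C2 \<in> CF E gam J1 J2 V x y" "C3 \<in> CF E gam J1 J2 V x y"
    and d: "C1 \<noteq> C2" "C1 \<noteq> C3" "C2 \<noteq> C3"
  obtain z1 where z1: "z1 \<noteq> x" "z1 \<noteq> y" "{x, z1} \<in> E" "{y, z1} \<in> E"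
      "frontier C1 = path_image (gam {x, y}) \<union> path_image (gam {y, z1}) \<union> path_image (gam {x, z1})"
    using C(1) unfolding CF_def by blast
  obtain z2 where z2: "z2 \<noteq> x" "z2 \<noteq> y" "{x, z2} \<in> E" "{y, z2} \<in> E"
      "frontier C2 = path_image (gam {x, y}) \<union> path_image (gam {y, z2}) \<union> path_image (gam {x, z2})"
    using C(2) unfolding CF_def by blast
  obtain z3 where z3: "z3 \<noteq> x" "z3 \<noteq> y" "{x, z3} \<in> E" "{y, z3} \<in> E"
      "frontier C3 = path_image (gam {x, y}) \<union> path_image (gam {y, z3}) \<union> path_image (gam {x, z3})"
    using C(3) unfolding CF_def by blast
  have Cc: "C1 \<in> cells V E gam J1 J2" "C2 \<in> cells V E gam J1 J2" "C3 \<in> cells V E gam J1 J2"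
    using C unfolding CF_def by auto
  show False by (rule three_cells[OF CA e Cc d z1 z2 z3])
qed

definition XS where
  "XS V E gam J1 J2 V' E' gam' h u C = {e' \<in> eIncAdj V E gam J1 J2 V' E' gam' h. u \<in> e' \<and> path_image (gam' e') \<subseteq> closure C}"

lemma SF_sub:
  assumes CA: "comb_annulus V E gam J1 J2" and R: "ann_refinement V E gam J1 J2 V' E' gam'"
    and F: "{x, y} \<in> E" "x \<noteq> y"
  shows "{e' \<in> E'. prj V E gam ` e' = {x, y}} \<subseteq>
    (\<Union>C\<in>CF E gam J1 J2 V x y. \<Union>h\<in>{h \<in> E. path_image (gam h) \<subseteq> frontier C}.
       \<Union>u\<in>h \<union> vInc V' gam h. XS V E gam J1 J2 V' E' gam' h u C)"
proof
  fix e' assume e': "e' \<in> {e' \<in> E'. prj V E gam ` e' = {x, y}}"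
  have G': "planar_graph V' E' gam'" using ref_PG[OF R] .
  obtain u v where uv: "e' = {u, v}" using PG_edge[OF G'] e' by blast
  have e'E: "{u, v} \<in> E'" using e' uv by simp
  obtain C a b c where C: "C \<in> cells V E gam J1 J2" "path_image (gam' {u, v}) \<subseteq> closure C"
    "a \<noteq> b" "b \<noteq> c" "a \<noteq> c" "{a, b} \<in> E" "{b, c} \<in> E" "{a, c} \<in> E"
    "frontier C = path_image (gam {a, b}) \<union> path_image (gam {b, c}) \<union> path_image (gam {a, c})"
    "u \<in> frontier C" "v \<in> frontier C" "u \<in> V'" "v \<in> V'"
    by (rule rA_edge_cell[OF CA R e'E])
  have ufr: "u \<in> path_image (gam {a, b}) \<union> path_image (gam {b, c}) \<union> path_image (gam {a, c})" using C(9,10) by simp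
  have vfr: "v \<in> path_image (gam {a, b}) \<union> path_image (gam {b, c}) \<union> path_image (gam {a, c})" using C(9,11) by simp
  have pu: "prj V E gam u \<in> {a, b, c}" using prj_tri_vert[OF CA R C(12) ufr C(6,7,8)] .
  have pv: "prj V E gam v \<in> {a, b, c}" using prj_tri_vert[OF CA R C(13) vfr C(6,7,8)] .
  have pe: "{prj V E gam u, prj V E gam v} = {x, y}" using e' uv by simp
  have xy: "x \<in> {a, b, c}" "y \<in> {a, b, c}" using pe pu pv by blast+
  obtain z where z: "z \<noteq> x" "z \<noteq> y" "{x, z} \<in> E" "{y, z} \<in> E"
    "path_image (gam {a, b}) \<union> path_image (gam {b, c}) \<union> path_image (gam {a, c}) =
     path_image (gam {x, y}) \<union> path_image (gam {y, z}) \<union> path_image (gam {x, z})"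
    using TRI[OF C(3,4,5,6,7,8) xy F(2), of "\<lambda>t. path_image (gam t)"] by blast
  have CinF: "C \<in> CF E gam J1 J2 V x y" unfolding CF_def using C(1,9) z by auto
  obtain h where h: "h \<in> {{a, b}, {b, c}, {a, c}}" "u \<in> path_image (gam h)" "u \<in> h \<union> vInc V' gam h"
    using prj_tri[OF CA R C(12) ufr C(6,7,8)] by blast
  have hE: "h \<in> E" using h(1) C(6,7,8) by blast
  have hfr: "path_image (gam h) \<subseteq> frontier C" using h(1) C(9) by blast
  have "e' \<in> eIncAdj V E gam J1 J2 V' E' gam' h"
    unfolding eIncAdj_def using e' uv h(3) C(1,2) hfr by blast
  then have "e' \<in> XS V E gam J1 J2 V' E' gam' h u C" unfolding XS_def using uv C(2) by simp
  then show "e' \<in> (\<Union>C\<in>CF E gam J1 J2 V x y. \<Union>h\<in>{h \<in> E. path_image (gam h) \<subseteq> frontier C}.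
       \<Union>u\<in>h \<union> vInc V' gam h. XS V E gam J1 J2 V' E' gam' h u C)"
    using CinF hE hfr h(3) by blast
qed

lemma SF_card:
  assumes CA: "comb_annulus V E gam J1 J2" and R: "ann_refinement V E gam J1 J2 V' E' gam'"
    and SB: "strongly_bounded b c V E gam J1 J2 V' E' gam'" and F: "F \<in> E"
  shows "card {e' \<in> E'. prj V E gam ` e' = F} \<le> 2 * (3 * ((2 + 2 * b) * c))"
proof -
  have G: "planar_graph V E gam" using CA_PG[OF CA] .
  have G': "planar_graph V' E' gam'" using ref_PG[OF R] .
  obtain x y where xy: "F = {x, y}" "x \<noteq> y" using PG_edge[OF G F] by metis
  have WB: "weakly_bounded b E gam E' gam'" using SB by (simp add: strongly_bounded_def)
  have SBc: "\<And>h u C. h \<in> E \<Longrightarrow> u \<in> h \<union> vInc V' gam h \<Longrightarrow> C \<in> cells V E gam J1 J2 \<Longrightarrow>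
      card (XS V E gam J1 J2 V' E' gam' h u C) \<le> c"
    using SB unfolding strongly_bounded_def XS_def by blast
  let ?U = "(\<Union>C\<in>CF E gam J1 J2 V x y. \<Union>h\<in>{h \<in> E. path_image (gam h) \<subseteq> frontier C}.
       \<Union>u\<in>h \<union> vInc V' gam h. XS V E gam J1 J2 V' E' gam' h u C)"
  have cU: "card ?U \<le> 2 * (3 * ((2 + 2 * b) * c))"
  proof (rule card_UN_bound)
    show "finite (CF E gam J1 J2 V x y)" "card (CF E gam J1 J2 V x y) \<le> 2"
      using CF_card[OF CA F[unfolded xy] xy(2)] by auto
  next
    fix C assume "C \<in> CF E gam J1 J2 V x y"
    then have C: "C \<in> cells V E gam J1 J2" unfolding CF_def by blast
    show "card (\<Union>h\<in>{h \<in> E. path_image (gam h) \<subseteq> frontier C}. \<Union>u\<in>h \<union> vInc V' gam h. XS V E gam J1 J2 V' E' gam' h u C)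
      \<le> 3 * ((2 + 2 * b) * c)"
    proof (rule card_UN_bound)
      show "finite {h \<in> E. path_image (gam h) \<subseteq> frontier C}" "card {h \<in> E. path_image (gam h) \<subseteq> frontier C} \<le> 3"
        using H_card[OF CA C] by auto
    next
      fix h assume "h \<in> {h \<in> E. path_image (gam h) \<subseteq> frontier C}"
      then have h: "h \<in> E" by blast
      show "card (\<Union>u\<in>h \<union> vInc V' gam h. XS V E gam J1 J2 V' E' gam' h u C) \<le> (2 + 2 * b) * c"
      proof (rule card_UN_bound)
        show "finite (h \<union> vInc V' gam h)" "card (h \<union> vInc V' gam h) \<le> 2 + 2 * b"
          using hv_card[OF CA R WB h] by auto
      next
        fix u assume "u \<in> h \<union> vInc V' gam h"
        then show "card (XS V E gam J1 J2 V' E' gam' h u C) \<le> c" using SBc h C by blast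
      qed
    qed
  qed
  have "finite ?U"
  proof -
    have "?U \<subseteq> E'" unfolding XS_def eIncAdj_def by blast
    then show ?thesis using finite_subset PG_finite_E[OF G'] by blast
  qed
  moreover have "{e' \<in> E'. prj V E gam ` e' = F} \<subseteq> ?U" using SF_sub[OF CA R F[unfolded xy] xy(2)] xy(1) by simp
  ultimately have "card {e' \<in> E'. prj V E gam ` e' = F} \<le> card ?U" by (rule card_mono)
  then show ?thesis using cU by linarith
qed


lemma basics:
  assumes CA: "comb_annulus V E gam J1 J2" and R: "ann_refinement V E gam J1 J2 V' E' gam'"
  shows "finite E" "finite E'" "E \<noteq> {}" "E' \<noteq> {}"
    "Ps E (V \<inter> path_image J1) (V \<inter> path_image J2) \<noteq> {}"
    "Ps E' (V' \<inter> path_image J1) (V' \<inter> path_image J2) \<noteq> {}"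
proof -
  have G: "planar_graph V E gam" using CA_PG[OF CA] .
  have G': "planar_graph V' E' gam'" using ref_PG[OF R] .
  show fE: "finite E" using PG_finite_E[OF G] .
  show fE': "finite E'" using PG_finite_E[OF G'] .
  have VV: "V \<subseteq> V'" using ref_VV[OF R] .
  have dJ: "path_image J1 \<inter> path_image J2 = {}" using J1J2_disj[OF CA] .
  obtain ws0 where ws0: "walk E ws0" "hd ws0 \<in> V \<inter> path_image J1" "last ws0 \<in> V \<inter> path_image J2"
    using A_path[OF CA] by blast
  show "Ps E (V \<inter> path_image J1) (V \<inter> path_image J2) \<noteq> {}" using ws0 by (auto simp: Ps_def)
  have hl: "hd ws0 \<noteq> last ws0" using ws0(2,3) dJ by auto
  show "E \<noteq> {}" using walk_two[OF ws0(1) hl] .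
  obtain ws1 where ws1: "walk E' ws1" "hd ws1 = hd ws0" "last ws1 = last ws0"
    using lift_walk[OF R G _ ws0(1), of "\<lambda>_. 0"] by auto
  have "ws1 \<in> Ps E' (V' \<inter> path_image J1) (V' \<inter> path_image J2)" using ws0 ws1 VV by (auto simp: Ps_def)
  then show "Ps E' (V' \<inter> path_image J1) (V' \<inter> path_image J2) \<noteq> {}" by blast
  show "E' \<noteq> {}" using walk_two[OF ws1(1)] ws1(2,3) hl by simp
qed

lemma partII:
  assumes CA: "comb_annulus V E gam J1 J2" and R: "ann_refinement V E gam J1 J2 V' E' gam'"
    and SB: "strongly_bounded b c V E gam J1 J2 V' E' gam'"
  shows "EEL E (V \<inter> path_image J1) (V \<inter> path_image J2)
     \<le> (real (2 * (3 * ((2 + 2 * b) * c))) + 1) * EEL E' (V' \<inter> path_image J1) (V' \<inter> path_image J2)"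
proof -
  let ?K = "2 * (3 * ((2 + 2 * b) * c))"
  note B = basics[OF CA R]
  let ?p = "prj V E gam"
  show ?thesis
  proof (rule GC[OF B(1) B(2) B(5) B(6) B(3) B(4)])
    have "0 \<le> real ?K" by (rule of_nat_0_le_iff)
    then show "0 < real ?K + 1" by linarith
  next
    fix m assume adm: "adm E m"
    have nn: "\<forall>e\<in>E. 0 \<le> m e" using adm by (simp add: adm_def)
    define m' where "m' e' = (if ?p ` e' \<in> E then m (?p ` e') else 0)" for e'
    have m'nn: "\<forall>e\<in>E'. 0 \<le> m' e" unfolding m'_def using nn by simp
    have sq: "(m' e')\<^sup>2 = (\<Sum>F\<in>E. if ?p ` e' = F then (m F)\<^sup>2 else 0)" for e'
      unfolding m'_def using B(1) by (simp add: sum.delta)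
    have "metric_area E' m' = (\<Sum>e'\<in>E'. \<Sum>F\<in>E. if ?p ` e' = F then (m F)\<^sup>2 else 0)"
      unfolding metric_area_def using sq by simp
    also have "\<dots> = (\<Sum>F\<in>E. \<Sum>e'\<in>E'. if ?p ` e' = F then (m F)\<^sup>2 else 0)" by (rule sum.swap)
    also have "\<dots> = (\<Sum>F\<in>E. real (card {e' \<in> E'. ?p ` e' = F}) * (m F)\<^sup>2)"
    proof (rule sum.cong[OF refl])
      fix F assume "F \<in> E"
      have "(\<Sum>e'\<in>E'. if ?p ` e' = F then (m F)\<^sup>2 else 0) = (\<Sum>e'\<in>{e' \<in> E'. ?p ` e' = F}. (m F)\<^sup>2)"
        by (rule sum.inter_filter[OF B(2), symmetric])
      then show "(\<Sum>e'\<in>E'. if ?p ` e' = F then (m F)\<^sup>2 else 0) = real (card {e' \<in> E'. ?p ` e' = F}) * (m F)\<^sup>2"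
        by simp
    qed
    also have "\<dots> \<le> (\<Sum>F\<in>E. real ?K * (m F)\<^sup>2)"
    proof (rule sum_mono)
      fix F assume F: "F \<in> E"
      have "card {e' \<in> E'. ?p ` e' = F} \<le> ?K" using SF_card[OF CA R SB F] .
      then have "real (card {e' \<in> E'. ?p ` e' = F}) \<le> real ?K" by linarith
      then show "real (card {e' \<in> E'. ?p ` e' = F}) * (m F)\<^sup>2 \<le> real ?K * (m F)\<^sup>2"
        by (intro mult_right_mono) auto
    qed
    also have "\<dots> = real ?K * metric_area E m" by (simp add: metric_area_def sum_distrib_left)
    also have "\<dots> \<le> (real ?K + 1) * metric_area E m" using area_nonneg[of E m] by (simp add: algebra_simps)
    finally have ar: "metric_area E' m' \<le> (real ?K + 1) * metric_area E m" .
    have ch: "\<And>u v. {u, v} \<in> E' \<Longrightarrow> ?p u = ?p v \<or> {?p u, ?p v} \<in> E" using chord[OF CA R] by blast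
    have il: "infl E (V \<inter> path_image J1) (V \<inter> path_image J2) m \<le> infl E' (V' \<inter> path_image J1) (V' \<inter> path_image J2) m'"
    proof (rule le_infl[OF B(6)])
      fix ws assume ws: "ws \<in> Ps E' (V' \<inter> path_image J1) (V' \<inter> path_image J2)"
      then have w: "walk E' ws" "hd ws \<in> V' \<inter> path_image J1" "last ws \<in> V' \<inter> path_image J2" by (auto simp: Ps_def)
      have pw: "walk E (pj ?p ws)" "plen m (pj ?p ws) \<le> plen m' ws"
        using pj_walk[OF w(1) ch nn] unfolding m'_def by auto
      have ne: "ws \<noteq> []" using w(1) by auto
      then obtain x xs where xxs: "ws = x # xs" by (cases ws) auto
      have "hd (pj ?p ws) = ?p (hd ws)" using pj_hd[of ?p x xs] xxs by (metis list.sel(1))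
      moreover have "last (pj ?p ws) = ?p (last ws)" using pj_last[OF ne] .
      ultimately have "pj ?p ws \<in> Ps E (V \<inter> path_image J1) (V \<inter> path_image J2)"
        using pw(1) w(2,3) prj_props[OF CA R] unfolding Ps_def by auto
      then have "infl E (V \<inter> path_image J1) (V \<inter> path_image J2) m \<le> plen m (pj ?p ws)" using infl_le nn by blast
      then show "infl E (V \<inter> path_image J1) (V \<inter> path_image J2) m \<le> plen m' ws" using pw(2) by linarith
    qed
    show "\<exists>mt. (\<forall>e\<in>E'. 0 \<le> mt e) \<and> metric_area E' mt \<le> (real ?K + 1) * metric_area E m \<and>
       infl E (V \<inter> path_image J1) (V \<inter> path_image J2) m \<le> infl E' (V' \<inter> path_image J1) (V' \<inter> path_image J2) mt"
      using m'nn ar il by blast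
  qed
qed

theorem mainTheorem3:
  fixes b c :: nat
  shows "\<exists>k::real. k \<ge> 1 \<and>
    (\<forall>V E gam J1 J2 V' E' gam'.
       comb_annulus V E gam J1 J2 \<and>
       ann_refinement V E gam J1 J2 V' E' gam' \<and>
       strongly_bounded b c V E gam J1 J2 V' E' gam' \<longrightarrow>
         EEL E' (V' \<inter> path_image J1) (V' \<inter> path_image J2) / k
           \<le> EEL E (V \<inter> path_image J1) (V \<inter> path_image J2) \<and>
         EEL E (V \<inter> path_image J1) (V \<inter> path_image J2)
           \<le> k * EEL E' (V' \<inter> path_image J1) (V' \<inter> path_image J2))"
proof -
  define K where "K = real (2 * (3 * ((2 + 2 * b) * c)))"
  define k where "k = real b + 1 + K + 1"
  have K0: "0 \<le> K" unfolding K_def by simp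
  have k1: "k \<ge> 1" unfolding k_def using K0 by simp
  have "EEL E' (V' \<inter> path_image J1) (V' \<inter> path_image J2) / k \<le> EEL E (V \<inter> path_image J1) (V \<inter> path_image J2) \<and>
        EEL E (V \<inter> path_image J1) (V \<inter> path_image J2) \<le> k * EEL E' (V' \<inter> path_image J1) (V' \<inter> path_image J2)"
    if CA: "comb_annulus V E gam J1 J2" and R: "ann_refinement V E gam J1 J2 V' E' gam'"
      and SB: "strongly_bounded b c V E gam J1 J2 V' E' gam'" for V E gam J1 J2 V' E' gam'
  proof -
    note B = basics[OF CA R]
    let ?A = "EEL E (V \<inter> path_image J1) (V \<inter> path_image J2)"
    let ?A' = "EEL E' (V' \<inter> path_image J1) (V' \<inter> path_image J2)"
    have A0: "0 \<le> ?A" using EEL_nonneg[OF B(1) B(3) B(5)] .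
    have A'0: "0 \<le> ?A'" using EEL_nonneg[OF B(2) B(4) B(6)] .
    have WB: "weakly_bounded b E gam E' gam'" using SB by (simp add: strongly_bounded_def)
    have I: "?A' \<le> (real b + 1) * ?A" using partI[OF CA R WB] .
    have II: "?A \<le> (K + 1) * ?A'" using partII[OF CA R SB] unfolding K_def .
    have "(real b + 1) * ?A \<le> k * ?A" unfolding k_def using A0 K0 by (intro mult_right_mono) auto
    then have "?A' \<le> k * ?A" using I by linarith
    then have c1: "?A' / k \<le> ?A" using k1 by (simp add: divide_le_eq mult.commute)
    have "(K + 1) * ?A' \<le> k * ?A'" unfolding k_def using A'0 by (intro mult_right_mono) auto
    then have c2: "?A \<le> k * ?A'" using II by linarith
    show ?thesis using c1 c2 by blast
  qed
  then show ?thesis using k1 by blast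
qed


end
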